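(* Let $\{a_k\}_{k\in\mathbb{Z}}$, $\{b_k\}_{k\in\mathbb{Z}}$ be real sequences with $a_k>0$, let $L$, $L^\ast$, $\mathcal{D}^\ast$, $J^-$, $S^\pm_z$ and the Wronskian be as in the context, and assume that $J^-$ has deficiency indices $(0,0)$. Let $(L',\mathcal D')$ be a self-adjoint extension of $(L,\mathcal{D}(\mathbb{Z}))$. For $z\in\mathbb{C}\setminus\mathbb{R}$ let $\Phi_z\in S^-_z$ be nonzero and $\phi_z\in S^+_z$, chosen with $\overline{(\Phi_z)_k}=(\Phi_{\bar z})_k$ and $\overline{(\phi_z)_k}=(\phi_{\bar z})_k$, such that (1) $[\phi_z,\Phi_z]\neq0$, and (2) the sequence $\tilde\phi_z$ with $(\tilde\phi_z)_k=0$ for $k<0$ and $(\tilde\phi_z)_k=(\phi_z)_k$ for $k\geq0$ belongs to $\mathcal D'$. Define $$G_{k,l}(z)=\frac{1}{[\phi_z,\Phi_z]}\begin{cases}(\Phi_z)_k(\phi_z)_l,& k\leq l,\\ (\Phi_z)_l(\phi_z)_k,& k>l,\end{cases}$$ and $(G(z)v)_k=\sum_{l\in\mathbb{Z}}v_lG_{k,l}(z)$ for $v\in\ell^2(\mathbb{Z})$. Then for every $z\in\mathbb{C}\setminus\mathbb{R}$ the resolvent of $(L',\mathcal D')$ is $(L'-z)^{-1}=G(z)$.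
   Context: $\{e_k\}_{k\in\mathbb{Z}}$ is the standard orthonormal basis of $\ell^2(\mathbb{Z})$, $\mathcal{D}(\mathbb{Z})$ the space of finite linear combinations of the $e_k$, $Le_k=a_ke_{k+1}+b_ke_k+a_{k-1}e_{k-1}$ on $\mathcal{D}(\mathbb{Z})$, and for any sequence $v$, $(L^\ast v)_k=a_kv_{k+1}+b_kv_k+a_{k-1}v_{k-1}$; $\mathcal{D}^\ast=\{v\in\ell^2(\mathbb{Z})\mid L^\ast v\in\ell^2(\mathbb{Z})\}$, and any self-adjoint extension of $L$ is a restriction of $L^\ast$. $J^-$ is the operator on $\ell^2(\mathbb{Z}_{\geq0})$ (standard basis $\{f_k\}$) defined on finite linear combinations by $J^-f_k=a_{-k-2}f_{k+1}+b_{-k-1}f_k+a_{-k-1}f_{k-1}$ for $k\geq1$ and $J^-f_0=a_{-2}f_1+b_{-1}f_0$; its deficiency indices are $(\dim\ker((J^-)^\ast-i),\dim\ker((J^-)^\ast+i))$. For $z\in\mathbb{C}$: $S^-_z=\{f=(f_k)_{k\in\mathbb{Z}}\mid L^\ast f=zf,\ \sum_{k\leq -1}|f_k|^2<\infty\}$ and $S^+_z=\{f\mid L^\ast f=zf,\ \sum_{k\geq0}|f_k|^2<\infty\}$. The Wronskian is $[u,v]_k=a_k(u_{k+1}v_k-u_kv_{k+1})$; for two solutions of $L^\ast u=zu$ it is independent of $k$ and denoted $[u,v]$. *)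

theory Defs
  imports "HOL-Analysis.Analysis"
begin

definition is_l2 :: "('i \<Rightarrow> complex) \<Rightarrow> bool" where
  "is_l2 v \<longleftrightarrow> (\<lambda>k. (cmod (v k))^2) summable_on UNIV"

definition l2_inner :: "('i \<Rightarrow> complex) \<Rightarrow> ('i \<Rightarrow> complex) \<Rightarrow> complex" where
  "l2_inner x y = (\<Sum>\<^sub>\<infinity>k. x k * cnj (y k))"

(* finitely supported sequences: D(Z), resp. finite combinations of the f_k *)
definition fin_supp :: "('i \<Rightarrow> complex) \<Rightarrow> bool" where
  "fin_supp v \<longleftrightarrow> finite {k. v k \<noteq> 0}"

(* the formal difference expression L^* (which agrees with L on D(Z)) *)
definition Lstar :: "(int \<Rightarrow> real) \<Rightarrow> (int \<Rightarrow> real) \<Rightarrow> (int \<Rightarrow> complex) \<Rightarrow> int \<Rightarrow> complex" where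
  "Lstar a b v k = of_real (a k) * v (k + 1) + of_real (b k) * v k + of_real (a (k - 1)) * v (k - 1)"

(* J^- acting on finite combinations of the f_n, written coordinatewise:
   J^- f_k = a_{-k-2} f_{k+1} + b_{-k-1} f_k + a_{-k-1} f_{k-1} (k>=1), J^- f_0 = a_{-2} f_1 + b_{-1} f_0 *)
definition Jminus :: "(int \<Rightarrow> real) \<Rightarrow> (int \<Rightarrow> real) \<Rightarrow> (nat \<Rightarrow> complex) \<Rightarrow> nat \<Rightarrow> complex" where
  "Jminus a b f n =
     (if n \<ge> 1 then of_real (a (- int n - 1)) * f (n - 1) else 0)
     + of_real (b (- int n - 1)) * f n + of_real (a (- int n - 2)) * f (n + 1)"

(* ker((J^-)^* - lam): g in dom (J^-)^* with (J^-)^* g = lam g, i.e.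
   <J^- f, g> = <f, lam g> for all f in the domain of J^- *)
definition Jminus_adj_ker :: "(int \<Rightarrow> real) \<Rightarrow> (int \<Rightarrow> real) \<Rightarrow> complex \<Rightarrow> (nat \<Rightarrow> complex) set" where
  "Jminus_adj_ker a b lam =
     {g. is_l2 g \<and> (\<forall>f. fin_supp f \<longrightarrow> l2_inner (Jminus a b f) g = l2_inner f (\<lambda>n. lam * g n))}"

definition Jminus_def00 :: "(int \<Rightarrow> real) \<Rightarrow> (int \<Rightarrow> real) \<Rightarrow> bool" where
  "Jminus_def00 a b \<longleftrightarrow> Jminus_adj_ker a b \<i> = {(\<lambda>n. 0)} \<and> Jminus_adj_ker a b (- \<i>) = {(\<lambda>n. 0)}"

definition selfadj_ext ::
  "(int \<Rightarrow> real) \<Rightarrow> (int \<Rightarrow> real) \<Rightarrow> ((int \<Rightarrow> complex) \<Rightarrow> (int \<Rightarrow> complex)) \<Rightarrow> (int \<Rightarrow> complex) set \<Rightarrow> bool" where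
  "selfadj_ext a b T D \<longleftrightarrow>
     \<comment> \<open>linear operator in l^2(Z)\<close>
     (\<forall>u\<in>D. is_l2 u \<and> is_l2 (T u)) \<and>
     (\<lambda>k. 0) \<in> D \<and>
     (\<forall>u\<in>D. \<forall>v\<in>D. (\<lambda>k. u k + v k) \<in> D \<and> T (\<lambda>k. u k + v k) = (\<lambda>k. T u k + T v k)) \<and>
     (\<forall>u\<in>D. \<forall>c::complex. (\<lambda>k. c * u k) \<in> D \<and> T (\<lambda>k. c * u k) = (\<lambda>k. c * T u k)) \<and>
     \<comment> \<open>extends L on D(Z)\<close>
     (\<forall>u. fin_supp u \<longrightarrow> u \<in> D \<and> T u = Lstar a b u) \<and>
     \<comment> \<open>self-adjoint: dom T^* = D and T^* = T\<close>
     (\<forall>v. v \<in> D \<longleftrightarrow> (is_l2 v \<and> (\<exists>w. is_l2 w \<and> (\<forall>u\<in>D. l2_inner (T u) v = l2_inner u w)))) \<and>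
     (\<forall>u\<in>D. \<forall>v\<in>D. l2_inner (T u) v = l2_inner u (T v))"

definition S_minus :: "(int \<Rightarrow> real) \<Rightarrow> (int \<Rightarrow> real) \<Rightarrow> complex \<Rightarrow> (int \<Rightarrow> complex) set" where
  "S_minus a b z = {f. Lstar a b f = (\<lambda>k. z * f k) \<and> (\<lambda>k. (cmod (f k))^2) summable_on {..-1}}"

definition S_plus :: "(int \<Rightarrow> real) \<Rightarrow> (int \<Rightarrow> real) \<Rightarrow> complex \<Rightarrow> (int \<Rightarrow> complex) set" where
  "S_plus a b z = {f. Lstar a b f = (\<lambda>k. z * f k) \<and> (\<lambda>k. (cmod (f k))^2) summable_on {0..}}"

definition wronski :: "(int \<Rightarrow> real) \<Rightarrow> (int \<Rightarrow> complex) \<Rightarrow> (int \<Rightarrow> complex) \<Rightarrow> int \<Rightarrow> complex" where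
  "wronski a u v k = of_real (a k) * (u (k + 1) * v k - u k * v (k + 1))"

definition Gker :: "(int \<Rightarrow> real) \<Rightarrow> (int \<Rightarrow> complex) \<Rightarrow> (int \<Rightarrow> complex) \<Rightarrow> int \<Rightarrow> int \<Rightarrow> complex" where
  "Gker a Ph ph k l =
     (if k \<le> l then Ph k * ph l else Ph l * ph k) / wronski a ph Ph 0"

definition Gop :: "(int \<Rightarrow> real) \<Rightarrow> (int \<Rightarrow> complex) \<Rightarrow> (int \<Rightarrow> complex) \<Rightarrow> (int \<Rightarrow> complex) \<Rightarrow> int \<Rightarrow> complex" where
  "Gop a Ph ph v k = (\<Sum>\<^sub>\<infinity>l. v l * Gker a Ph ph k l)"

end

theory Submission
  imports Defs
begin

abbreviation l2on :: "('i \<Rightarrow> complex) \<Rightarrow> 'i set \<Rightarrow> bool" where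
  "l2on f A \<equiv> (\<lambda>k. (cmod (f k))^2) summable_on A"

lemma l2_prod_abs:
  assumes "l2on x A" "l2on y A"
  shows "(\<lambda>k. cmod (x k) * cmod (y k)) summable_on A"
proof (rule summable_on_comparison_test)
  show "(\<lambda>k. (cmod (x k))^2 + (cmod (y k))^2) summable_on A"
    using assms by (rule summable_on_add)
  fix k show "cmod (x k) * cmod (y k) \<le> (cmod (x k))^2 + (cmod (y k))^2"
  proof -
    have "2*(cmod (x k) * cmod (y k)) \<le> (cmod (x k))^2 + (cmod (y k))^2"
      using sum_squares_bound[of "cmod (x k)" "cmod (y k)"] by (simp add: mult.assoc)
    moreover have "0 \<le> cmod (x k) * cmod (y k)" by simp
    ultimately show ?thesis by linarith
  qed
  show "0 \<le> cmod (x k) * cmod (y k)" by simp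
qed

lemma l2_prod:
  assumes "l2on x A" "l2on y A"
  shows "(\<lambda>k. x k * y k) summable_on A"
  unfolding summable_on_iff_abs_summable_on_complex
  using l2_prod_abs[OF assms] by (simp add: norm_mult)

lemma l2_cnj: "l2on (\<lambda>k. cnj (x k)) A = l2on x A"
  by simp

lemma l2_prod_cnj:
  assumes "l2on x A" "l2on y A"
  shows "(\<lambda>k. x k * cnj (y k)) summable_on A"
  using l2_prod[OF assms(1), of "\<lambda>k. cnj (y k)"] assms(2) by simp

lemma l2_add:
  assumes "l2on x A" "l2on y A"
  shows "l2on (\<lambda>k. x k + y k) A"
proof (rule summable_on_comparison_test)
  show "(\<lambda>k. 2*(cmod (x k))^2 + 2*(cmod (y k))^2) summable_on A"
    using assms by (intro summable_on_add summable_on_cmult_right)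
  fix k
  have "cmod (x k + y k) \<le> cmod (x k) + cmod (y k)" by (rule norm_triangle_ineq)
  hence "(cmod (x k + y k))^2 \<le> (cmod (x k) + cmod (y k))^2"
    by (simp add: power_mono)
  also have "\<dots> \<le> 2*(cmod (x k))^2 + 2*(cmod (y k))^2"
  proof -
    have "2*(cmod (x k) * cmod (y k)) \<le> (cmod (x k))^2 + (cmod (y k))^2"
      using sum_squares_bound[of "cmod (x k)" "cmod (y k)"] by (simp add: mult.assoc)
    thus ?thesis by (simp add: power2_sum)
  qed
  finally show "(cmod (x k + y k))^2 \<le> 2*(cmod (x k))^2 + 2*(cmod (y k))^2" .
qed simp

lemma l2_scale:
  assumes "l2on x A"
  shows "l2on (\<lambda>k. c * x k) A"
proof -
  have "(\<lambda>k. (cmod c)^2 * (cmod (x k))^2) summable_on A"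
    using assms by (rule summable_on_cmult_right)
  thus ?thesis by (simp add: norm_mult power_mult_distrib)
qed

lemma l2_minus:
  assumes "l2on x A" "l2on y A"
  shows "l2on (\<lambda>k. x k - y k) A"
  using l2_add[OF assms(1) l2_scale[OF assms(2), of "-1"]] by simp

lemma l2_subset: "l2on x A \<Longrightarrow> B \<subseteq> A \<Longrightarrow> l2on x B"
  by (rule summable_on_subset)

lemma l2_fin: assumes "finite {k. x k \<noteq> 0}" shows "l2on x A"
proof (rule finite_nonzero_values_imp_summable_on)
  show "finite {k \<in> A. (cmod (x k))^2 \<noteq> 0}"
    by (rule finite_subset[OF _ assms]) auto
qed

lemma l2_mod:
  assumes "l2on x A" "finite {k. x k \<noteq> y k}"
  shows "l2on y A"
proof -
  have "l2on (\<lambda>k. x k + (y k - x k)) A"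
    by (rule l2_add[OF assms(1) l2_fin], rule finite_subset[OF _ assms(2)]) auto
  thus ?thesis by simp
qed

lemma l2_union: "l2on x A \<Longrightarrow> l2on x B \<Longrightarrow> l2on x (A \<union> B)"
  by (rule summable_on_union)

lemma is_l2_split:
  assumes "l2on x {..(-1::int)}" "l2on x {0..}"
  shows "is_l2 x"
proof -
  have "UNIV = {..(-1::int)} \<union> {0..}" by auto
  thus ?thesis unfolding is_l2_def using l2_union[OF assms] by simp
qed

lemma partial_to_infsum:
  fixes f :: "int \<Rightarrow> 'b::{comm_monoid_add,t2_space}"
  assumes "f summable_on {..N}"
  shows "((\<lambda>M. sum f {M<..N}) \<longlongrightarrow> infsum f {..N}) at_bot"
proof -
  have lim: "(sum f \<longlongrightarrow> infsum f {..N}) (finite_subsets_at_top {..N})"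
    using infsum_tendsto[OF assms] .
  have fl: "filterlim (\<lambda>M. {M<..N}) (finite_subsets_at_top {..N}) at_bot"
  proof (subst filterlim_finite_subsets_at_top, intro allI impI)
    fix X :: "int set" assume X: "finite X \<and> X \<subseteq> {..N}"
    show "\<forall>\<^sub>F y in at_bot. finite {y<..N} \<and> X \<subseteq> {y<..N} \<and> {y<..N} \<subseteq> {..N}"
    proof (cases "X = {}")
      case True thus ?thesis by (intro always_eventually) auto
    next
      case False
      show ?thesis unfolding eventually_at_bot_linorder
        apply (rule exI[of _ "Min X - 1"])
        using X False by (auto dest: Min_le[rotated])
    qed
  qed
  show ?thesis using filterlim_compose[OF lim fl] by simp
qed


lemma tail_to0:
  fixes f :: "int \<Rightarrow> real"
  assumes "f summable_on {..N}"
  shows "((\<lambda>K. infsum f {..K}) \<longlongrightarrow> 0) at_bot"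
proof -
  have "((\<lambda>K. infsum f {..N} - sum f {K<..N}) \<longlongrightarrow> infsum f {..N} - infsum f {..N}) at_bot"
    by (intro tendsto_intros partial_to_infsum assms)
  hence lim: "((\<lambda>K. infsum f {..N} - sum f {K<..N}) \<longlongrightarrow> 0) at_bot" by simp
  have ev: "\<forall>\<^sub>F K in at_bot. infsum f {..N} - sum f {K<..N} = infsum f {..K}"
    unfolding eventually_at_bot_linorder
  proof (intro exI[of _ N] allI impI)
    fix K assume "K \<le> N"
    hence U: "{..N} = {..K} \<union> {K<..N}" by auto
    have "infsum f {..N} = infsum f {..K} + infsum f {K<..N}"
      unfolding U by (rule infsum_Un_disjoint) (use assms U in \<open>auto intro: summable_on_subset\<close>)
    thus "infsum f {..N} - sum f {K<..N} = infsum f {..K}" by simp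
  qed
  show ?thesis by (rule Lim_transform_eventually[OF lim ev])
qed

lemma green_step:
  "wronski a x y k - wronski a x y (k-1) = y k * Lstar a b x k - x k * Lstar a b y k"
  by (simp add: wronski_def Lstar_def algebra_simps)

lemma green_interval:
  assumes "M \<le> N"
  shows "(\<Sum>k\<in>{M<..N}. y k * Lstar a b x k - x k * Lstar a b y k) = wronski a x y N - wronski a x y M"
  using assms
proof (induction N rule: int_ge_induct)
  case base thus ?case by simp
next
  case (step i)
  have E: "{M<..i+1} = insert (i+1) {M<..i}" using step.hyps by auto
  have "(\<Sum>k\<in>{M<..i+1}. y k * Lstar a b x k - x k * Lstar a b y k)
      = (y (i+1) * Lstar a b x (i+1) - x (i+1) * Lstar a b y (i+1)) + (wronski a x y i - wronski a x y M)"
    unfolding E using step.IH by (subst sum.insert) auto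
  also have "\<dots> = wronski a x y (i+1) - wronski a x y M"
  proof -
    have "wronski a x y (i+1) = (y (i+1) * Lstar a b x (i+1) - x (i+1) * Lstar a b y (i+1)) + wronski a x y i"
    proof -
      have g: "wronski a x y (i+1) - wronski a x y i = y (i+1) * Lstar a b x (i+1) - x (i+1) * Lstar a b y (i+1)"
        using green_step[of a x y "i+1" b] by simp
      show ?thesis by (metis g diff_add_cancel)
    qed
    thus ?thesis by simp
  qed
  finally show ?case .
qed

definition solz :: "(int \<Rightarrow> real) \<Rightarrow> (int \<Rightarrow> real) \<Rightarrow> complex \<Rightarrow> (int \<Rightarrow> complex) \<Rightarrow> bool" where
  "solz a b w x \<longleftrightarrow> (\<forall>k. Lstar a b x k = w * x k)"

lemma wronski_const:
  assumes "solz a b w x" "solz a b w y"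
  shows "wronski a x y k = wronski a x y 0"
proof -
  have st: "wronski a x y k = wronski a x y (k-1)" for k
    using green_step[of a x y k b] assms unfolding solz_def by (simp add: algebra_simps)
  show ?thesis
  proof (induction k rule: int_induct[where k=0])
    case base thus ?case by simp
  next
    case (step1 i) thus ?case using st[of "i+1"] by simp
  next
    case (step2 i) thus ?case using st[of i] by simp
  qed
qed

lemma vc_rep:
  "wronski a x Q k * P k - wronski a x P k * Q k = x k * wronski a P Q k"
  by (simp add: wronski_def algebra_simps)

lemma vc_interval:
  assumes "solz a b w P" "k \<le> K"
  shows "wronski a x P k = wronski a x P K - (\<Sum>l\<in>{k<..K}. P l * (Lstar a b x l - w * x l))"
proof -
  have "(\<Sum>l\<in>{k<..K}. P l * Lstar a b x l - x l * Lstar a b P l) = wronski a x P K - wronski a x P k"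
    by (rule green_interval[OF assms(2)])
  moreover have "(\<Sum>l\<in>{k<..K}. P l * Lstar a b x l - x l * Lstar a b P l) = (\<Sum>l\<in>{k<..K}. P l * (Lstar a b x l - w * x l))"
    using assms(1) unfolding solz_def by (intro sum.cong) (auto simp: algebra_simps)
  ultimately show ?thesis by simp
qed

lemma est_L2:
  fixes y r pa qa pb qb :: "int \<Rightarrow> real"
  assumes fin: "finite I"
    and y0: "\<And>k. k \<in> I \<Longrightarrow> 0 \<le> y k"
    and r0: "\<And>k. k \<in> I \<Longrightarrow> 0 \<le> r k"
    and pa0: "\<And>k. k \<in> I \<Longrightarrow> 0 \<le> pa k" and qa0: "\<And>k. k \<in> I \<Longrightarrow> 0 \<le> qa k"
    and pb0: "\<And>k. k \<in> I \<Longrightarrow> 0 \<le> pb k" and qb0: "\<And>k. k \<in> I \<Longrightarrow> 0 \<le> qb k"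
    and bnd: "\<And>k. k \<in> I \<Longrightarrow> y k \<le> r k + pa k * (\<Sum>l\<in>I. qa l * y l) + pb k * (\<Sum>l\<in>I. qb l * y l)"
    and small: "L2_set pa I * L2_set qa I + L2_set pb I * L2_set qb I \<le> 1/2"
  shows "L2_set y I \<le> 2 * L2_set r I"
proof -
  define sa where "sa = (\<Sum>l\<in>I. qa l * y l)"
  define sb where "sb = (\<Sum>l\<in>I. qb l * y l)"
  have sa0: "0 \<le> sa" unfolding sa_def using qa0 y0 by (intro sum_nonneg) auto
  have sb0: "0 \<le> sb" unfolding sb_def using qb0 y0 by (intro sum_nonneg) auto
  have sab: "sa \<le> L2_set qa I * L2_set y I"
  proof -
    have "sa = (\<Sum>l\<in>I. \<bar>qa l\<bar> * \<bar>y l\<bar>)" unfolding sa_def using qa0 y0 by (intro sum.cong) auto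
    thus ?thesis using L2_set_mult_ineq[of qa y I] by simp
  qed
  have sbb: "sb \<le> L2_set qb I * L2_set y I"
  proof -
    have "sb = (\<Sum>l\<in>I. \<bar>qb l\<bar> * \<bar>y l\<bar>)" unfolding sb_def using qb0 y0 by (intro sum.cong) auto
    thus ?thesis using L2_set_mult_ineq[of qb y I] by simp
  qed
  have "L2_set y I \<le> L2_set (\<lambda>k. r k + pa k * sa + pb k * sb) I"
    by (rule L2_set_mono) (use bnd y0 in \<open>auto simp: sa_def sb_def\<close>)
  also have "\<dots> \<le> L2_set (\<lambda>k. r k + pa k * sa) I + L2_set (\<lambda>k. pb k * sb) I"
    by (rule L2_set_triangle_ineq)
  also have "\<dots> \<le> L2_set r I + L2_set (\<lambda>k. pa k * sa) I + L2_set (\<lambda>k. pb k * sb) I"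
    using L2_set_triangle_ineq[of r "\<lambda>k. pa k * sa" I] by simp
  also have "L2_set (\<lambda>k. pa k * sa) I = L2_set pa I * sa"
    using L2_set_left_distrib[OF sa0, of pa I] by simp
  also have "L2_set (\<lambda>k. pb k * sb) I = L2_set pb I * sb"
    using L2_set_left_distrib[OF sb0, of pb I] by simp
  finally have A: "L2_set y I \<le> L2_set r I + L2_set pa I * sa + L2_set pb I * sb" .
  have "L2_set pa I * sa \<le> L2_set pa I * (L2_set qa I * L2_set y I)"
    by (rule mult_left_mono[OF sab]) simp
  moreover have "L2_set pb I * sb \<le> L2_set pb I * (L2_set qb I * L2_set y I)"
    by (rule mult_left_mono[OF sbb]) simp
  moreover have "(L2_set pa I * L2_set qa I + L2_set pb I * L2_set qb I) * L2_set y I \<le> 1/2 * L2_set y I"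
    by (rule mult_right_mono[OF small]) simp
  ultimately have "L2_set y I \<le> L2_set r I + 1/2 * L2_set y I"
    using A by (simp add: algebra_simps)
  thus ?thesis by simp
qed

lemma bounded_L2_summable:
  fixes y :: "int \<Rightarrow> real"
  assumes "\<And>M. M \<le> K \<Longrightarrow> L2_set y {M..K} \<le> B"
  shows "(\<lambda>k. (y k)^2) summable_on {..K}"
proof (rule nonneg_bdd_above_summable_on)
  show "bdd_above (sum (\<lambda>k. (y k)^2) ` {F. F \<subseteq> {..K} \<and> finite F})"
  proof (rule bdd_aboveI2)
    fix F assume F: "F \<in> {F. F \<subseteq> {..K} \<and> finite F}"
    show "sum (\<lambda>k. (y k)^2) F \<le> B^2"
    proof (cases "F = {}")
      case True thus ?thesis by simp
    next
      case False
      define M where "M = Min F"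
      have MK: "M \<le> K" using F False unfolding M_def by (auto intro: order.trans[OF Min_le])
      have sub: "F \<subseteq> {M..K}" using F False unfolding M_def by auto
      have "sum (\<lambda>k. (y k)^2) F \<le> sum (\<lambda>k. (y k)^2) {M..K}"
        by (rule sum_mono2) (use sub in auto)
      also have "\<dots> = (L2_set y {M..K})^2" unfolding L2_set_def by (simp add: sum_nonneg)
      also have "\<dots> \<le> B^2"
        by (rule power_mono[OF assms[OF MK]]) simp
      finally show ?thesis .
    qed
  qed
qed simp

lemma L2_le_tail:
  fixes y :: "int \<Rightarrow> complex"
  assumes "l2on y {..K}" "M \<le> K"
  shows "L2_set (\<lambda>k. cmod (y k)) {M..K} \<le> sqrt (infsum (\<lambda>k. (cmod (y k))^2) {..K})"
  unfolding L2_set_def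
  by (rule real_sqrt_le_mono, rule finite_sum_le_infsum[OF assms(1)]) auto


lemma eventually_tail_le:
  fixes y :: "int \<Rightarrow> complex"
  assumes "l2on y {..N}" "e > 0"
  shows "\<forall>\<^sub>F K in at_bot. infsum (\<lambda>k. (cmod (y k))^2) {..K} < e"
  using order_tendstoD(2)[OF tail_to0[OF assms(1)] assms(2)] .

lemma wsum_bound:
  fixes M k K :: int
  assumes "M \<le> k" "k \<le> K"
  shows "cmod (\<Sum>l\<in>{k<..K}. (g l::complex) * h l) \<le> (\<Sum>l\<in>{M..K}. cmod (h l) * cmod (g l))"
proof -
  have "cmod (\<Sum>l\<in>{k<..K}. g l * h l) \<le> (\<Sum>l\<in>{k<..K}. cmod (g l * h l))" by (rule norm_sum)
  also have "\<dots> \<le> (\<Sum>l\<in>{M..K}. cmod (g l * h l))"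
    by (rule sum_mono2) (use assms in auto)
  finally show ?thesis by (simp add: norm_mult mult.commute)
qed

lemma LP_lemma:
  assumes solP: "solz a b w P" and solQ: "solz a b w Q"
    and wPQ: "\<And>k. wronski a P Q k = 1"
    and lP: "l2on P {..-1}" and lx: "l2on x {..-1}"
    and lf: "l2on (\<lambda>l. Lstar a b x l - w * x l) {..-1}"
    and c: "c > 0" and K0: "\<And>k. k \<le> K0 \<Longrightarrow> c \<le> cmod (wronski a x P k)"
  shows "l2on Q {..-1}"
proof -
  define f where "f l = Lstar a b x l - w * x l" for l
  have lf': "l2on f {..-1}" using lf unfolding f_def .
  define tP where "tP K = infsum (\<lambda>k. (cmod (P k))^2) {..K}" for K
  define tf where "tf K = infsum (\<lambda>k. (cmod (f k))^2) {..K}" for K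
  define tx where "tx K = infsum (\<lambda>k. (cmod (x k))^2) {..K}" for K
  have "\<forall>\<^sub>F K in at_bot. tP K < 1 \<and> tf K < c^2/4 \<and> K \<le> min K0 (-1)"
    unfolding tP_def tf_def
    by (intro eventually_conj eventually_tail_le[OF lP] eventually_tail_le[OF lf'] eventually_le_at_bot)
       (use c in auto)
  then obtain K where K: "tP K < 1" "tf K < c^2/4" "K \<le> K0" "K \<le> -1"
    unfolding eventually_at_bot_linorder by auto
  have lPK: "l2on P {..K}" by (rule l2_subset[OF lP]) (use K in auto)
  have lfK: "l2on f {..K}" by (rule l2_subset[OF lf']) (use K in auto)
  have lxK: "l2on x {..K}" by (rule l2_subset[OF lx]) (use K in auto)
  define C where "C = cmod (wronski a x Q K)"
  define B where "B = 2 * ((1/c) * (sqrt (tx K) + C * sqrt (tP K)))"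
  have bnd: "L2_set (\<lambda>k. cmod (Q k)) {M..K} \<le> B" if MK: "M \<le> K" for M
  proof -
    let ?I = "{M..K}"
    have yk: "cmod (Q k) \<le> (1/c) * (cmod (x k) + C * cmod (P k))
              + ((1/c) * cmod (P k)) * (\<Sum>l\<in>?I. cmod (f l) * cmod (Q l))" if k: "k \<in> ?I" for k
    proof -
      have kK0: "k \<le> K0" using k K by auto
      have eq: "wronski a x P k * Q k = wronski a x Q k * P k - x k"
        using vc_rep[of a x Q k P] wPQ[of k] by (simp add: algebra_simps)
      have wq: "wronski a x Q k = wronski a x Q K - (\<Sum>l\<in>{k<..K}. Q l * f l)"
        using vc_interval[OF solQ, of k K x] k unfolding f_def by auto
      have S: "cmod (wronski a x Q k) \<le> C + (\<Sum>l\<in>?I. cmod (f l) * cmod (Q l))"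
      proof -
        have "cmod (wronski a x Q K - (\<Sum>l\<in>{k<..K}. Q l * f l)) \<le> cmod (wronski a x Q K) + cmod (\<Sum>l\<in>{k<..K}. Q l * f l)"
          by (rule norm_triangle_ineq4)
        thus ?thesis unfolding wq C_def using wsum_bound[of M k K Q f] k by auto
      qed
      have "c * cmod (Q k) \<le> cmod (wronski a x P k) * cmod (Q k)"
        by (rule mult_right_mono[OF K0[OF kK0]]) simp
      also have "\<dots> = cmod (wronski a x Q k * P k - x k)" using eq by (metis norm_mult)
      also have "\<dots> \<le> cmod (wronski a x Q k) * cmod (P k) + cmod (x k)"
        by (metis norm_mult norm_triangle_ineq4)
      also have "\<dots> \<le> (C + (\<Sum>l\<in>?I. cmod (f l) * cmod (Q l))) * cmod (P k) + cmod (x k)"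
        by (intro add_right_mono mult_right_mono S) simp
      finally have "c * cmod (Q k) \<le> (C + (\<Sum>l\<in>?I. cmod (f l) * cmod (Q l))) * cmod (P k) + cmod (x k)" .
      hence "cmod (Q k) \<le> ((C + (\<Sum>l\<in>?I. cmod (f l) * cmod (Q l))) * cmod (P k) + cmod (x k)) / c"
        using c by (simp add: field_simps)
      moreover have "((C + (\<Sum>l\<in>?I. cmod (f l) * cmod (Q l))) * cmod (P k) + cmod (x k)) / c
          = (1/c) * (cmod (x k) + C * cmod (P k)) + ((1/c) * cmod (P k)) * (\<Sum>l\<in>?I. cmod (f l) * cmod (Q l))"
        using c by (simp add: field_simps)
      ultimately show ?thesis by linarith
    qed
    have "L2_set (\<lambda>k. cmod (Q k)) ?I \<le> 2 * L2_set (\<lambda>k. (1/c) * (cmod (x k) + C * cmod (P k))) ?I"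
    proof (rule est_L2[where pa="\<lambda>k. (1/c) * cmod (P k)" and qa="\<lambda>l. cmod (f l)" and pb="\<lambda>_. 0" and qb="\<lambda>_. 0"])
      show "cmod (Q k) \<le> (1/c) * (cmod (x k) + C * cmod (P k)) + (1/c) * cmod (P k) * (\<Sum>l\<in>?I. cmod (f l) * cmod (Q l))
            + 0 * (\<Sum>l\<in>?I. 0 * cmod (Q l))" if "k \<in> ?I" for k
        using yk[OF that] by simp
      have "L2_set (\<lambda>k. (1/c) * cmod (P k)) ?I = (1/c) * L2_set (\<lambda>k. cmod (P k)) ?I"
        by (rule sym, rule L2_set_right_distrib) (use c in simp)
      also have "\<dots> \<le> (1/c) * sqrt (tP K)"
        unfolding tP_def using L2_le_tail[OF lPK MK] c by (simp add: divide_right_mono)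
      also have "\<dots> \<le> 1/c" using K(1) c by (simp add: divide_right_mono)
      finally have p1b: "L2_set (\<lambda>k. (1/c) * cmod (P k)) ?I \<le> 1/c" .
      have q1b: "L2_set (\<lambda>l. cmod (f l)) ?I \<le> c/2"
      proof -
        have "L2_set (\<lambda>l. cmod (f l)) ?I \<le> sqrt (tf K)"
          unfolding tf_def using L2_le_tail[OF lfK MK] .
        also have "\<dots> \<le> sqrt (c^2/4)" using K(2) by simp
        also have "\<dots> = c/2" using c by (simp add: real_sqrt_divide)
        finally show ?thesis .
      qed
      have "L2_set (\<lambda>k. (1/c) * cmod (P k)) ?I * L2_set (\<lambda>l. cmod (f l)) ?I \<le> (1/c) * (c/2)"
        by (rule mult_mono[OF p1b q1b]) (use c in auto)
      thus "L2_set (\<lambda>k. (1/c) * cmod (P k)) ?I * L2_set (\<lambda>l. cmod (f l)) ?I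
            + L2_set (\<lambda>_. 0) ?I * L2_set (\<lambda>_. 0) ?I \<le> 1/2"
        using c by (simp add: L2_set_0')
    qed (use c in \<open>auto simp: C_def\<close>)
    also have "L2_set (\<lambda>k. (1/c) * (cmod (x k) + C * cmod (P k))) ?I
             = (1/c) * L2_set (\<lambda>k. cmod (x k) + C * cmod (P k)) ?I"
      by (rule sym, rule L2_set_right_distrib) (use c in simp)
    also have "L2_set (\<lambda>k. cmod (x k) + C * cmod (P k)) ?I
             \<le> L2_set (\<lambda>k. cmod (x k)) ?I + L2_set (\<lambda>k. C * cmod (P k)) ?I"
      by (rule L2_set_triangle_ineq)
    also have "L2_set (\<lambda>k. C * cmod (P k)) ?I = C * L2_set (\<lambda>k. cmod (P k)) ?I"
      by (rule sym, rule L2_set_right_distrib) (simp add: C_def)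
    also have "L2_set (\<lambda>k. cmod (x k)) ?I + C * L2_set (\<lambda>k. cmod (P k)) ?I \<le> sqrt (tx K) + C * sqrt (tP K)"
      using L2_le_tail[OF lxK MK] L2_le_tail[OF lPK MK] unfolding tx_def tP_def
      by (intro add_mono mult_left_mono) (auto simp: C_def)
    finally show ?thesis unfolding B_def using c
      by (simp add: mult_left_mono) (meson divide_right_mono less_imp_le mult_left_mono zero_le_numeral)
  qed
  have sK: "l2on Q {..K}"
    using bounded_L2_summable[of K "\<lambda>k. cmod (Q k)" B] bnd by simp
  have "l2on Q ({..K} \<union> {K<..-1})"
    by (rule l2_union[OF sK]) (rule summable_on_finite, simp)
  moreover have "{..-1} \<subseteq> {..K} \<union> {K<..-1}" by auto
  ultimately show ?thesis by (rule l2_subset)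
qed


lemma ZI_lemma:
  assumes solP: "solz a b w P" and solQ: "solz a b w Q"
    and wPQ: "\<And>k. wronski a P Q k = 1"
    and lP: "l2on P {..-1}" and lQ: "l2on Q {..-1}"
    and eq: "\<And>l. l \<le> -1 \<Longrightarrow> Lstar a b u l = z' * u l"
  shows "l2on u {..-1}"
proof -
  define e where "e = cmod (z' - w)"
  have e0: "0 \<le> e" unfolding e_def by simp
  define \<delta> where "\<delta> = 1 / (4 * (e + 1))"
  have d0: "\<delta> > 0" unfolding \<delta>_def using e0 by simp
  define tP where "tP K = infsum (\<lambda>k. (cmod (P k))^2) {..K}" for K
  define tQ where "tQ K = infsum (\<lambda>k. (cmod (Q k))^2) {..K}" for K
  have "\<forall>\<^sub>F K in at_bot. tP K < \<delta> \<and> tQ K < \<delta> \<and> K \<le> -1"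
    unfolding tP_def tQ_def
    by (intro eventually_conj eventually_tail_le[OF lP] eventually_tail_le[OF lQ] eventually_le_at_bot d0)
  then obtain K where K: "tP K < \<delta>" "tQ K < \<delta>" "K \<le> -1"
    unfolding eventually_at_bot_linorder by auto
  have lPK: "l2on P {..K}" by (rule l2_subset[OF lP]) (use K in auto)
  have lQK: "l2on Q {..K}" by (rule l2_subset[OF lQ]) (use K in auto)
  define f where "f l = Lstar a b u l - w * u l" for l
  have fI: "cmod (f l) = e * cmod (u l)" if "l \<le> K" for l
  proof -
    have "f l = (z' - w) * u l" using eq[of l] that K unfolding f_def by (simp add: left_diff_distrib)
    thus ?thesis by (simp add: norm_mult e_def)
  qed
  define C1 where "C1 = cmod (wronski a u Q K)"
  define C2 where "C2 = cmod (wronski a u P K)"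
  define B where "B = 2 * (C1 * sqrt (tP K) + C2 * sqrt (tQ K))"
  have bnd: "L2_set (\<lambda>k. cmod (u k)) {M..K} \<le> B" if MK: "M \<le> K" for M
  proof -
    let ?I = "{M..K}"
    have Ssub: "(\<Sum>l\<in>?I. cmod (f l) * cmod (R l)) = (\<Sum>l\<in>?I. (e * cmod (R l)) * cmod (u l))" for R
      by (intro sum.cong) (auto simp: fI)
    have wb: "cmod (wronski a u R k) \<le> cmod (wronski a u R K) + (\<Sum>l\<in>?I. (e * cmod (R l)) * cmod (u l))"
      if k: "k \<in> ?I" and solR: "solz a b w R" for k R
    proof -
      have wq: "wronski a u R k = wronski a u R K - (\<Sum>l\<in>{k<..K}. R l * f l)"
        using vc_interval[OF solR, of k K u] k unfolding f_def by auto
      have "cmod (wronski a u R K - (\<Sum>l\<in>{k<..K}. R l * f l)) \<le> cmod (wronski a u R K) + cmod (\<Sum>l\<in>{k<..K}. R l * f l)"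
        by (rule norm_triangle_ineq4)
      thus ?thesis unfolding wq using wsum_bound[of M k K R f] k Ssub[of R] by auto
    qed
    have yk: "cmod (u k) \<le> (C1 * cmod (P k) + C2 * cmod (Q k))
        + cmod (P k) * (\<Sum>l\<in>?I. (e * cmod (Q l)) * cmod (u l))
        + cmod (Q k) * (\<Sum>l\<in>?I. (e * cmod (P l)) * cmod (u l))" if k: "k \<in> ?I" for k
    proof -
      have "u k = wronski a u Q k * P k - wronski a u P k * Q k"
        using vc_rep[of a u Q k P] wPQ[of k] by simp
      hence "cmod (u k) \<le> cmod (wronski a u Q k) * cmod (P k) + cmod (wronski a u P k) * cmod (Q k)"
        by (metis norm_mult norm_triangle_ineq4)
      also have "\<dots> \<le> (C1 + (\<Sum>l\<in>?I. (e * cmod (Q l)) * cmod (u l))) * cmod (P k)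
                    + (C2 + (\<Sum>l\<in>?I. (e * cmod (P l)) * cmod (u l))) * cmod (Q k)"
        unfolding C1_def C2_def
        by (intro add_mono mult_right_mono wb[OF k solQ] wb[OF k solP]) auto
      finally have h: "cmod (u k) \<le> (C1 + (\<Sum>l\<in>?I. (e * cmod (Q l)) * cmod (u l))) * cmod (P k)
                    + (C2 + (\<Sum>l\<in>?I. (e * cmod (P l)) * cmod (u l))) * cmod (Q k)" .
      moreover have "(C1 + (\<Sum>l\<in>?I. (e * cmod (Q l)) * cmod (u l))) * cmod (P k)
                    + (C2 + (\<Sum>l\<in>?I. (e * cmod (P l)) * cmod (u l))) * cmod (Q k)
          = (C1 * cmod (P k) + C2 * cmod (Q k))
        + cmod (P k) * (\<Sum>l\<in>?I. (e * cmod (Q l)) * cmod (u l))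
        + cmod (Q k) * (\<Sum>l\<in>?I. (e * cmod (P l)) * cmod (u l))" by (simp add: algebra_simps)
      ultimately show ?thesis by linarith
    qed
    have "L2_set (\<lambda>k. cmod (u k)) ?I \<le> 2 * L2_set (\<lambda>k. C1 * cmod (P k) + C2 * cmod (Q k)) ?I"
    proof (rule est_L2[where pa="\<lambda>k. cmod (P k)" and qa="\<lambda>l. e * cmod (Q l)"
                         and pb="\<lambda>k. cmod (Q k)" and qb="\<lambda>l. e * cmod (P l)"])
      have LP: "L2_set (\<lambda>k. cmod (P k)) ?I \<le> sqrt \<delta>"
        using L2_le_tail[OF lPK MK] K(1) unfolding tP_def
        by (meson less_imp_le order_trans real_sqrt_le_mono)
      have LQ: "L2_set (\<lambda>k. cmod (Q k)) ?I \<le> sqrt \<delta>"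
        using L2_le_tail[OF lQK MK] K(2) unfolding tQ_def
        by (meson less_imp_le order_trans real_sqrt_le_mono)
      have eP: "L2_set (\<lambda>l. e * cmod (P l)) ?I = e * L2_set (\<lambda>k. cmod (P k)) ?I"
        by (rule sym, rule L2_set_right_distrib) (rule e0)
      have eQ: "L2_set (\<lambda>l. e * cmod (Q l)) ?I = e * L2_set (\<lambda>k. cmod (Q k)) ?I"
        by (rule sym, rule L2_set_right_distrib) (rule e0)
      have "L2_set (\<lambda>k. cmod (P k)) ?I * L2_set (\<lambda>k. cmod (Q k)) ?I \<le> sqrt \<delta> * sqrt \<delta>"
        by (rule mult_mono[OF LP LQ]) (use d0 in auto)
      also have "\<dots> = \<delta>" using d0 by simp
      finally have PQ: "L2_set (\<lambda>k. cmod (P k)) ?I * L2_set (\<lambda>k. cmod (Q k)) ?I \<le> \<delta>" .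
      have "2 * e * \<delta> \<le> 1/2" unfolding \<delta>_def using e0 by (simp add: field_simps)
      moreover have "2 * e * (L2_set (\<lambda>k. cmod (P k)) ?I * L2_set (\<lambda>k. cmod (Q k)) ?I) \<le> 2 * e * \<delta>"
        by (rule mult_left_mono[OF PQ]) (use e0 in simp)
      ultimately show "L2_set (\<lambda>k. cmod (P k)) ?I * L2_set (\<lambda>l. e * cmod (Q l)) ?I
          + L2_set (\<lambda>k. cmod (Q k)) ?I * L2_set (\<lambda>l. e * cmod (P l)) ?I \<le> 1/2"
        unfolding eP eQ by (simp add: algebra_simps)
    qed (use yk e0 in \<open>auto simp: C1_def C2_def\<close>)
    also have "L2_set (\<lambda>k. C1 * cmod (P k) + C2 * cmod (Q k)) ?I
        \<le> L2_set (\<lambda>k. C1 * cmod (P k)) ?I + L2_set (\<lambda>k. C2 * cmod (Q k)) ?I"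
      by (rule L2_set_triangle_ineq)
    also have "L2_set (\<lambda>k. C1 * cmod (P k)) ?I = C1 * L2_set (\<lambda>k. cmod (P k)) ?I"
      by (rule sym, rule L2_set_right_distrib) (simp add: C1_def)
    also have "L2_set (\<lambda>k. C2 * cmod (Q k)) ?I = C2 * L2_set (\<lambda>k. cmod (Q k)) ?I"
      by (rule sym, rule L2_set_right_distrib) (simp add: C2_def)
    also have "C1 * L2_set (\<lambda>k. cmod (P k)) ?I + C2 * L2_set (\<lambda>k. cmod (Q k)) ?I
        \<le> C1 * sqrt (tP K) + C2 * sqrt (tQ K)"
      using L2_le_tail[OF lPK MK] L2_le_tail[OF lQK MK] unfolding tP_def tQ_def
      by (intro add_mono mult_left_mono) (auto simp: C1_def C2_def)
    finally show ?thesis unfolding B_def by simp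
  qed
  have sK: "l2on u {..K}"
    using bounded_L2_summable[of K "\<lambda>k. cmod (u k)" B] bnd by simp
  have "l2on u ({..K} \<union> {K<..-1})"
    by (rule l2_union[OF sK]) (rule summable_on_finite, simp)
  moreover have "{..-1} \<subseteq> {..K} \<union> {K<..-1}" by auto
  ultimately show ?thesis by (rule l2_subset)
qed


fun th :: "(int \<Rightarrow> real) \<Rightarrow> (int \<Rightarrow> real) \<Rightarrow> nat \<Rightarrow> complex" where
  "th a b 0 = 0"
| "th a b (Suc 0) = 1"
| "th a b (Suc (Suc n)) = ((\<i> - of_real (b (- int n - 1))) * th a b (Suc n) - of_real (a (- int n - 1)) * th a b n)
       / of_real (a (- int n - 2))"

definition theta :: "(int \<Rightarrow> real) \<Rightarrow> (int \<Rightarrow> real) \<Rightarrow> int \<Rightarrow> complex" where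
  "theta a b k = (if k \<le> 0 then th a b (nat (-k)) else 0)"

lemma th_rec:
  assumes apos: "\<And>k. a k > 0"
  shows "of_real (a (- int n - 1)) * th a b n + of_real (b (- int n - 1)) * th a b (Suc n)
       + of_real (a (- int n - 2)) * th a b (Suc (Suc n)) = \<i> * th a b (Suc n)"
proof -
  have "a (- int n - 2) \<noteq> 0" using apos[of "- int n - 2"] by simp
  hence "of_real (a (- int n - 2)) * th a b (Suc (Suc n))
       = (\<i> - of_real (b (- int n - 1))) * th a b (Suc n) - of_real (a (- int n - 1)) * th a b n"
    by simp
  thus ?thesis by (simp add: algebra_simps)
qed

lemma theta_eq:
  assumes apos: "\<And>k. a k > 0" and l: "l \<le> -1"
  shows "Lstar a b (theta a b) l = \<i> * theta a b l"
proof -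
  define n where "n = nat (- l - 1)"
  have ln: "l = - int n - 1" using l unfolding n_def by simp
  have e1: "nat (- l) = Suc n" using l unfolding n_def by simp
  have e0: "nat (- (l + 1)) = n" using l unfolding n_def by simp
  have e2: "nat (- (l - 1)) = Suc (Suc n)" using l unfolding n_def by simp
  have "Lstar a b (theta a b) l = of_real (a (- int n - 1)) * th a b n + of_real (b (- int n - 1)) * th a b (Suc n)
       + of_real (a (- int n - 2)) * th a b (Suc (Suc n))"
    unfolding Lstar_def theta_def using l e0 e1 e2 by (simp add: ln algebra_simps)
  also have "\<dots> = \<i> * th a b (Suc n)" by (rule th_rec[OF apos])
  also have "\<dots> = \<i> * theta a b l" unfolding theta_def using l e1 by simp
  finally show ?thesis .
qed

lemma J_green:
  "(\<Sum>n<N. Jminus a b f n * h n - f n * Jminus a b h n)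
     = (if N = 0 then 0 else of_real (a (- int N - 1)) * (f N * h (N - 1) - f (N - 1) * h N))"
proof (induction N)
  case 0 thus ?case by simp
next
  case (Suc N)
  show ?case
  proof (cases N)
    case 0 thus ?thesis by (simp add: Jminus_def algebra_simps)
  next
    case (Suc m)
    have "(\<Sum>n<Suc N. Jminus a b f n * h n - f n * Jminus a b h n)
        = of_real (a (- int N - 1)) * (f N * h (N - 1) - f (N - 1) * h N)
          + (Jminus a b f N * h N - f N * Jminus a b h N)"
      using Suc.IH Suc by simp
    also have "\<dots> = of_real (a (- int (Suc N) - 1)) * (f (Suc N) * h N - f N * h (Suc N))"
      using Suc by (simp add: Jminus_def algebra_simps)
    finally show ?thesis by simp
  qed
qed

lemma infsum_fin_supp:
  assumes "finite S" "\<And>n. n \<notin> S \<Longrightarrow> F n = 0"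
  shows "infsum F UNIV = sum F S"
  by (rule infsumI, rule has_sum_finite_neutralI) (use assms in auto)

lemma theta_not_l2:
  assumes apos: "\<And>k. a k > 0" and def00: "Jminus_def00 a b"
  shows "\<not> l2on (theta a b) {..-1}"
proof
  assume l2: "l2on (theta a b) {..-1}"
  define g where "g n = th a b (Suc n)" for n
  have bij: "bij_betw (\<lambda>n::nat. - int n - 1) UNIV {..-1}"
    by (rule bij_betwI[where g="\<lambda>k. nat (- k - 1)"]) auto
  have "(\<lambda>n. (cmod (theta a b (- int n - 1)))^2) summable_on UNIV"
    using summable_on_reindex_bij_betw[OF bij, of "\<lambda>k. (cmod (theta a b k))^2"] l2 by simp
  moreover have "theta a b (- int n - 1) = g n" for n
    unfolding theta_def g_def by (simp add: nat_add_distrib)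
  ultimately have gl2: "is_l2 g" unfolding is_l2_def by simp
  have Jg: "Jminus a b g n = \<i> * g n" for n
  proof -
    have "Jminus a b g n = of_real (a (- int n - 1)) * th a b n + of_real (b (- int n - 1)) * th a b (Suc n)
       + of_real (a (- int n - 2)) * th a b (Suc (Suc n))"
      unfolding Jminus_def g_def by (cases n) auto
    also have "\<dots> = \<i> * g n" unfolding g_def by (rule th_rec[OF apos])
    finally show ?thesis .
  qed
  have Jcnj: "Jminus a b (\<lambda>n. cnj (g n)) n = cnj (Jminus a b g n)" for n
    by (simp add: Jminus_def)
  have "g \<in> Jminus_adj_ker a b \<i>"
    unfolding Jminus_adj_ker_def
  proof (intro CollectI conjI allI impI gl2)
    fix f :: "nat \<Rightarrow> complex" assume fs: "fin_supp f"
    then obtain N0 where N0: "{k. f k \<noteq> 0} \<subseteq> {..<N0}"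
      unfolding fin_supp_def using finite_nat_bounded by blast
    have fz: "f n = 0" if "n \<ge> N0" for n using N0 that by force
    define N where "N = Suc N0"
    have "l2_inner (Jminus a b f) g = (\<Sum>n<N. Jminus a b f n * cnj (g n))"
      unfolding l2_inner_def
      by (rule infsum_fin_supp) (auto simp: N_def Jminus_def fz)
    moreover have "l2_inner f (\<lambda>n. \<i> * g n) = (\<Sum>n<N. f n * Jminus a b (\<lambda>n. cnj (g n)) n)"
      unfolding l2_inner_def Jcnj Jg
      by (rule infsum_fin_supp) (auto simp: N_def fz)
    moreover have "(\<Sum>n<N. Jminus a b f n * cnj (g n) - f n * Jminus a b (\<lambda>n. cnj (g n)) n) = 0"
      unfolding J_green by (simp add: N_def fz)
    ultimately show "l2_inner (Jminus a b f) g = l2_inner f (\<lambda>n. \<i> * g n)"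
      by (simp add: sum_subtractf)
  qed
  hence "g = (\<lambda>n. 0)" using def00 unfolding Jminus_def00_def by blast
  moreover have "g 0 = 1" unfolding g_def by simp
  ultimately show False by (metis zero_neq_one)
qed


lemma no_LC:
  assumes apos: "\<And>k. a k > 0" and def00: "Jminus_def00 a b"
    and solP: "solz a b w P" and solQ: "solz a b w Q"
    and wPQ: "\<And>k. wronski a P Q k = 1"
    and lP: "l2on P {..-1}" and lQ: "l2on Q {..-1}"
  shows False
  using ZI_lemma[OF solP solQ wPQ lP lQ theta_eq[OF apos]] theta_not_l2[OF apos def00] by blast

definition nrm2 :: "('i \<Rightarrow> complex) \<Rightarrow> real" where
  "nrm2 x = infsum (\<lambda>k. (cmod (x k))^2) UNIV"

lemma nrm2_nonneg: "0 \<le> nrm2 x"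
  unfolding nrm2_def by (rule infsum_nonneg) simp

lemma inner_summable: "is_l2 x \<Longrightarrow> is_l2 y \<Longrightarrow> (\<lambda>k. x k * cnj (y k)) summable_on UNIV"
  unfolding is_l2_def by (rule l2_prod_cnj)

lemma inner_add2:
  assumes "is_l2 x" "is_l2 y1" "is_l2 y2"
  shows "l2_inner x (\<lambda>k. y1 k + y2 k) = l2_inner x y1 + l2_inner x y2"
  unfolding l2_inner_def using inner_summable[OF assms(1,2)] inner_summable[OF assms(1,3)]
  by (simp add: distrib_left infsum_add)

lemma inner_scale2:
  shows "l2_inner x (\<lambda>k. c * y k) = cnj c * l2_inner x y"
  unfolding l2_inner_def
  by (simp add: infsum_cmult_right' mult.left_commute)

lemma inner_diff2:
  assumes "is_l2 x" "is_l2 y1" "is_l2 y2"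
  shows "l2_inner x (\<lambda>k. y1 k - y2 k) = l2_inner x y1 - l2_inner x y2"
proof -
  have "is_l2 (\<lambda>k. (-1) * y2 k)" using assms(3) unfolding is_l2_def by (rule l2_scale)
  hence "l2_inner x (\<lambda>k. y1 k + (-1) * y2 k) = l2_inner x y1 + l2_inner x (\<lambda>k. (-1) * y2 k)"
    using inner_add2[OF assms(1,2)] by blast
  thus ?thesis using inner_scale2[of x "-1" y2] by simp
qed

lemma inner_cnj: "l2_inner y x = cnj (l2_inner x y)"
  unfolding l2_inner_def by (simp flip: infsum_cnj add: mult.commute)

lemma inner_diff1:
  assumes "is_l2 x1" "is_l2 x2" "is_l2 y"
  shows "l2_inner (\<lambda>k. x1 k - x2 k) y = l2_inner x1 y - l2_inner x2 y"
  using inner_diff2[OF assms(3,1,2)] inner_cnj by (metis complex_cnj_diff)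

lemma inner_scale1:
  shows "l2_inner (\<lambda>k. c * x k) y = c * l2_inner x y"
  unfolding l2_inner_def
  by (simp add: infsum_cmult_right' mult.assoc)

lemma inner_self: assumes "is_l2 x" shows "l2_inner x x = of_real (nrm2 x)"
proof -
  have "l2_inner x x = infsum (\<lambda>k. of_real ((cmod (x k))^2)) UNIV"
    unfolding l2_inner_def by (intro infsum_cong) (rule complex_norm_square[symmetric])
  also have "\<dots> = of_real (nrm2 x)" unfolding nrm2_def
    by (rule infsumI, rule has_sum_of_real, rule has_sum_infsum) (use assms in \<open>simp add: is_l2_def\<close>)
  finally show ?thesis .
qed

lemma CS:
  assumes "is_l2 x" "is_l2 y"
  shows "cmod (l2_inner x y) \<le> sqrt (nrm2 x) * sqrt (nrm2 y)"
proof -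
  have ab: "(\<lambda>k. cmod (x k) * cmod (y k)) summable_on UNIV"
    using l2_prod_abs assms unfolding is_l2_def by blast
  have "cmod (l2_inner x y) \<le> infsum (\<lambda>k. cmod (x k) * cmod (y k)) UNIV"
    unfolding l2_inner_def
    by (rule norm_infsum_le[OF has_sum_infsum[OF inner_summable[OF assms]] has_sum_infsum[OF ab]])
       (simp add: norm_mult)
  also have "\<dots> \<le> sqrt (nrm2 x) * sqrt (nrm2 y)"
  proof (rule infsum_le_finite_sums[OF ab])
    fix F :: "'a set" assume F: "finite F"
    have "(\<Sum>k\<in>F. cmod (x k) * cmod (y k)) = (\<Sum>k\<in>F. \<bar>cmod (x k)\<bar> * \<bar>cmod (y k)\<bar>)" by simp
    also have "\<dots> \<le> L2_set (\<lambda>k. cmod (x k)) F * L2_set (\<lambda>k. cmod (y k)) F" by (rule L2_set_mult_ineq)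
    also have "\<dots> \<le> sqrt (nrm2 x) * sqrt (nrm2 y)"
      unfolding L2_set_def nrm2_def
      by (intro mult_mono real_sqrt_le_mono finite_sum_le_infsum) (use assms F in \<open>auto simp: is_l2_def intro: infsum_nonneg sum_nonneg\<close>)
    finally show "(\<Sum>k\<in>F. cmod (x k) * cmod (y k)) \<le> sqrt (nrm2 x) * sqrt (nrm2 y)" .
  qed
  finally show ?thesis .
qed

lemma nrm2_zero:
  assumes "is_l2 x" "nrm2 x \<le> 0"
  shows "x k = 0"
proof -
  have "(cmod (x k))^2 = 0"
    by (rule nonneg_infsum_le_0D[of "\<lambda>k. (cmod (x k))^2" UNIV]) (use assms in \<open>auto simp: nrm2_def is_l2_def\<close>)
  thus ?thesis by simp
qed

lemma l2_cofin: "l2on f A \<Longrightarrow> finite (B - A) \<Longrightarrow> l2on f B"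
proof -
  assume "l2on f A" "finite (B - A)"
  hence "l2on f (A \<union> (B - A))" by (intro l2_union) auto
  thus "l2on f B" by (rule l2_subset) auto
qed


definition ek :: "int \<Rightarrow> int \<Rightarrow> complex" where
  "ek k = (\<lambda>j. if j = k then 1 else 0)"

lemma fin_supp_ek: "fin_supp (ek k)"
  unfolding fin_supp_def ek_def by simp

lemma inner_ek_right: "l2_inner x (ek k) = x k"
  unfolding l2_inner_def
  by (subst infsum_fin_supp[of "{k}"]) (auto simp: ek_def)

lemma Lstar_ek: "Lstar a b (ek k) j = (if j = k - 1 then of_real (a j) else 0) + (if j = k then of_real (b j) else 0)
     + (if j = k + 1 then of_real (a (j - 1)) else 0)"
  unfolding Lstar_def ek_def by auto

lemma inner_Lek: "l2_inner x (Lstar a b (ek k)) = Lstar a b x k"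
proof -
  have "l2_inner x (Lstar a b (ek k)) = (\<Sum>j\<in>{k-1,k,k+1}. x j * cnj (Lstar a b (ek k) j))"
    unfolding l2_inner_def by (rule infsum_fin_supp) (auto simp: Lstar_ek)
  also have "\<dots> = x (k-1) * of_real (a (k-1)) + x k * of_real (b k) + x (k+1) * of_real (a k)"
    by (simp add: Lstar_ek)
  also have "\<dots> = Lstar a b x k"
    by (simp add: Lstar_def algebra_simps)
  finally show ?thesis .
qed

context
  fixes a b :: "int \<Rightarrow> real"
    and T :: "(int \<Rightarrow> complex) \<Rightarrow> (int \<Rightarrow> complex)"
    and D :: "(int \<Rightarrow> complex) set"
  assumes sa: "selfadj_ext a b T D"
begin

lemma D_l2: "u \<in> D \<Longrightarrow> is_l2 u" using sa unfolding selfadj_ext_def by blast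
lemma D_l2T: "u \<in> D \<Longrightarrow> is_l2 (T u)" using sa unfolding selfadj_ext_def by blast
lemma D_0: "(\<lambda>k. 0) \<in> D" using sa unfolding selfadj_ext_def by blast
lemma D_add: "u \<in> D \<Longrightarrow> v \<in> D \<Longrightarrow> (\<lambda>k. u k + v k) \<in> D" using sa unfolding selfadj_ext_def by blast
lemma D_scale: "u \<in> D \<Longrightarrow> (\<lambda>k. c * u k) \<in> D" using sa unfolding selfadj_ext_def by blast
lemma D_fin: "fin_supp u \<Longrightarrow> u \<in> D" using sa unfolding selfadj_ext_def by blast
lemma D_finT: "fin_supp u \<Longrightarrow> T u = Lstar a b u" using sa unfolding selfadj_ext_def by blast
lemma D_char: "v \<in> D \<longleftrightarrow> (is_l2 v \<and> (\<exists>w. is_l2 w \<and> (\<forall>u\<in>D. l2_inner (T u) v = l2_inner u w)))"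
  using sa unfolding selfadj_ext_def by blast
lemma D_sym: "u \<in> D \<Longrightarrow> v \<in> D \<Longrightarrow> l2_inner (T u) v = l2_inner u (T v)"
  using sa unfolding selfadj_ext_def by blast

lemma D_diff: "u \<in> D \<Longrightarrow> v \<in> D \<Longrightarrow> (\<lambda>k. u k - v k) \<in> D"
  using D_add[of u "\<lambda>k. (-1) * v k"] D_scale[of v "-1"] by simp

lemma D_sum: "finite S \<Longrightarrow> (\<And>m. m \<in> S \<Longrightarrow> U m \<in> D) \<Longrightarrow> (\<lambda>k. \<Sum>m\<in>S. c m * U m k) \<in> D"
proof (induction S rule: finite_induct)
  case empty thus ?case using D_0 by simp
next
  case (insert x F)
  have "(\<lambda>k. c x * U x k + (\<Sum>m\<in>F. c m * U m k)) \<in> D"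
    using insert by (intro D_add D_scale) auto
  thus ?case using insert by simp
qed

lemma D_T: assumes "u \<in> D" shows "T u = Lstar a b u"
proof
  fix k
  have "T u k = l2_inner (T u) (ek k)" by (simp add: inner_ek_right)
  also have "\<dots> = l2_inner u (T (ek k))" by (rule D_sym[OF assms D_fin[OF fin_supp_ek]])
  also have "\<dots> = Lstar a b u k" using D_finT[OF fin_supp_ek] inner_Lek by simp
  finally show "T u k = Lstar a b u k" .
qed

lemma D_mod: "u \<in> D \<Longrightarrow> finite {k. u k \<noteq> v k} \<Longrightarrow> v \<in> D"
proof -
  assume u: "u \<in> D" and f: "finite {k. u k \<noteq> v k}"
  have "fin_supp (\<lambda>k. v k - u k)" unfolding fin_supp_def by (rule finite_subset[OF _ f]) auto
  hence "(\<lambda>k. u k + (v k - u k)) \<in> D" by (intro D_add u D_fin)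
  thus "v \<in> D" by simp
qed

lemma D_bound:
  assumes u: "u \<in> D"
  shows "\<bar>Im z\<bar> * sqrt (nrm2 u) \<le> sqrt (nrm2 (\<lambda>k. T u k - z * u k))"
proof -
  have lu: "is_l2 u" and lTu: "is_l2 (T u)" using D_l2 D_l2T u by auto
  have lzu: "is_l2 (\<lambda>k. z * u k)" using lu unfolding is_l2_def by (rule l2_scale)
  have ly: "is_l2 (\<lambda>k. T u k - z * u k)" using lTu lzu unfolding is_l2_def by (rule l2_minus)
  have "l2_inner (T u) u = cnj (l2_inner (T u) u)" using D_sym[OF u u] inner_cnj[of u "T u"] by simp
  hence "Im (l2_inner (T u) u) = Im (cnj (l2_inner (T u) u))" by (rule arg_cong)
  hence real: "Im (l2_inner (T u) u) = 0" by simp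
  have "l2_inner (\<lambda>k. T u k - z * u k) u = l2_inner (T u) u - z * of_real (nrm2 u)"
    using inner_diff1[OF lTu lzu lu] inner_scale1[of z u u] inner_self[OF lu] by simp
  hence "Im (l2_inner (\<lambda>k. T u k - z * u k) u) = - Im z * nrm2 u" using real by simp
  hence "\<bar>Im z\<bar> * nrm2 u \<le> cmod (l2_inner (\<lambda>k. T u k - z * u k) u)"
    using abs_Im_le_cmod[of "l2_inner (\<lambda>k. T u k - z * u k) u"] nrm2_nonneg[of u]
    by (simp add: abs_mult)
  also have "\<dots> \<le> sqrt (nrm2 (\<lambda>k. T u k - z * u k)) * sqrt (nrm2 u)" by (rule CS[OF ly lu])
  finally have h: "\<bar>Im z\<bar> * nrm2 u \<le> sqrt (nrm2 (\<lambda>k. T u k - z * u k)) * sqrt (nrm2 u)" .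
  show ?thesis
  proof (cases "nrm2 u = 0")
    case True thus ?thesis by (simp add: nrm2_nonneg)
  next
    case False
    hence pos: "sqrt (nrm2 u) > 0" using nrm2_nonneg[of u] by simp
    have "nrm2 u = sqrt (nrm2 u) * sqrt (nrm2 u)" using nrm2_nonneg[of u] by simp
    hence "(\<bar>Im z\<bar> * sqrt (nrm2 u)) * sqrt (nrm2 u) \<le> sqrt (nrm2 (\<lambda>k. T u k - z * u k)) * sqrt (nrm2 u)"
      using h by (simp add: mult.assoc)
    thus ?thesis using pos by simp
  qed
qed

end


lemma infsum_diff':
  fixes f g :: "'a \<Rightarrow> 'b::{topological_ab_group_add,t2_space}"
  assumes "f summable_on A" "g summable_on A"
  shows "infsum (\<lambda>k. f k - g k) A = infsum f A - infsum g A"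
  using infsum_add[OF assms(1) summable_on_uminus[THEN iffD2, OF assms(2)]] infsum_uminus[of g A]
  by simp

lemma Lstar_scale: "Lstar a b (\<lambda>k. c * x k) k = c * Lstar a b x k"
  by (simp add: Lstar_def algebra_simps)

lemma Lstar_cnj: "Lstar a b (\<lambda>k. cnj (x k)) k = cnj (Lstar a b x k)"
  by (simp add: Lstar_def)

lemma Lstar_add: "Lstar a b (\<lambda>k. x k + y k) k = Lstar a b x k + Lstar a b y k"
  by (simp add: Lstar_def algebra_simps)

lemma Lstar_diff: "Lstar a b (\<lambda>k. x k - y k) k = Lstar a b x k - Lstar a b y k"
  by (simp add: Lstar_def algebra_simps)

lemma wronski_scale2: "wronski a x (\<lambda>k. c * y k) k = c * wronski a x y k"
  by (simp add: wronski_def algebra_simps)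

lemma wronski_swap: "wronski a x y k = - wronski a y x k"
  by (simp add: wronski_def algebra_simps)

context
  fixes a b :: "int \<Rightarrow> real"
    and T :: "(int \<Rightarrow> complex) \<Rightarrow> (int \<Rightarrow> complex)"
    and D :: "(int \<Rightarrow> complex) set"
    and Phi phi :: "complex \<Rightarrow> int \<Rightarrow> complex"
  assumes apos: "\<And>k. a k > 0"
    and def00: "Jminus_def00 a b"
    and sa: "selfadj_ext a b T D"
    and Phi_S: "\<And>z. Im z \<noteq> 0 \<Longrightarrow> Phi z \<in> S_minus a b z \<and> Phi z \<noteq> (\<lambda>k. 0)"
    and phi_S: "\<And>z. Im z \<noteq> 0 \<Longrightarrow> phi z \<in> S_plus a b z"
    and Phi_cnj: "\<And>z k. Im z \<noteq> 0 \<Longrightarrow> cnj (Phi z k) = Phi (cnj z) k"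
    and phi_cnj: "\<And>z k. Im z \<noteq> 0 \<Longrightarrow> cnj (phi z k) = phi (cnj z) k"
    and wr: "\<And>z. Im z \<noteq> 0 \<Longrightarrow> wronski a (phi z) (Phi z) 0 \<noteq> 0"
    and trunc: "\<And>z. Im z \<noteq> 0 \<Longrightarrow> (\<lambda>k. if k < 0 then 0 else phi z k) \<in> D"
begin

lemma solPhi: "Im z \<noteq> 0 \<Longrightarrow> solz a b z (Phi z)"
  using Phi_S unfolding S_minus_def solz_def by (metis (mono_tags, lifting) mem_Collect_eq)
lemma l2Phi: "Im z \<noteq> 0 \<Longrightarrow> l2on (Phi z) {..-1}"
  using Phi_S unfolding S_minus_def by blast
lemma solphi: "Im z \<noteq> 0 \<Longrightarrow> solz a b z (phi z)"
  using phi_S unfolding S_plus_def solz_def by (metis (mono_tags, lifting) mem_Collect_eq)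
lemma l2phi: "Im z \<noteq> 0 \<Longrightarrow> l2on (phi z) {0..}"
  using phi_S unfolding S_plus_def by blast

lemma Wconst: "Im z \<noteq> 0 \<Longrightarrow> wronski a (phi z) (Phi z) k = wronski a (phi z) (Phi z) 0"
  by (rule wronski_const[OF solphi solPhi])

lemma Psi_D:
  assumes z: "Im z \<noteq> 0"
  shows "(\<lambda>k. if k \<le> 0 then Phi z k else 0) \<in> D"
proof -
  define w where "w = cnj z"
  have w: "Im w \<noteq> 0" unfolding w_def using z by simp
  define P where "P = Phi w"
  define Psi where "Psi k = (if k \<le> 0 then Phi z k else 0)" for k
  define y where "y k = (if k \<le> 0 then P k else 0)" for k
  have ycnj: "cnj (Psi k) = y k" for k
    unfolding Psi_def y_def P_def w_def using Phi_cnj[OF z] by simp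
  have lPsi: "is_l2 Psi"
  proof (rule is_l2_split)
    show "l2on Psi {..-1}"
      using l2Phi[OF z] by (rule summable_on_cong[THEN iffD1, rotated]) (auto simp: Psi_def)
    show "l2on Psi {0..}"
      by (rule finite_nonzero_values_imp_summable_on, rule finite_subset[of _ "{0}"]) (auto simp: Psi_def)
  qed
  have lLPsi: "is_l2 (Lstar a b Psi)"
    unfolding is_l2_def
  proof (rule l2_mod)
    show "l2on (\<lambda>k. z * Psi k) UNIV" using lPsi unfolding is_l2_def by (rule l2_scale)
    have "{k. z * Psi k \<noteq> Lstar a b Psi k} \<subseteq> {0, 1}"
    proof
      fix k assume k: "k \<in> {k. z * Psi k \<noteq> Lstar a b Psi k}"
      { assume "k \<le> -1"
        hence "Lstar a b Psi k = Lstar a b (Phi z) k" unfolding Lstar_def Psi_def by simp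
        also have "\<dots> = z * Psi k" using solPhi[OF z] \<open>k \<le> -1\<close> unfolding solz_def Psi_def by simp
        finally have False using k by simp }
      moreover
      { assume "k \<ge> 2"
        hence "Lstar a b Psi k = 0" "Psi k = 0" unfolding Lstar_def Psi_def by simp_all
        hence False using k by simp }
      ultimately show "k \<in> {0, 1}" by force
    qed
    thus "finite {k. z * Psi k \<noteq> Lstar a b Psi k}" by (rule finite_subset) simp
  qed
  have key: "l2_inner (T u) Psi = l2_inner u (Lstar a b Psi)" if u: "u \<in> D" for u
  proof -
    have lu: "is_l2 u" and lTu: "is_l2 (T u)" using D_l2[OF sa] D_l2T[OF sa] u by auto
    have Tu: "T u = Lstar a b u" using D_T[OF sa u] .
    define h where "h k = y k * Lstar a b u k - u k * Lstar a b y k" for k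
    have s1: "(\<lambda>k. T u k * cnj (Psi k)) summable_on UNIV" by (rule inner_summable[OF lTu lPsi])
    have s2: "(\<lambda>k. u k * cnj (Lstar a b Psi k)) summable_on UNIV" by (rule inner_summable[OF lu lLPsi])
    have Ly: "Lstar a b y k = cnj (Lstar a b Psi k)" for k
    proof -
      have "y = (\<lambda>k. cnj (Psi k))" using ycnj by auto
      thus ?thesis using Lstar_cnj[of a b Psi k] by simp
    qed
    have hfun: "h = (\<lambda>k. T u k * cnj (Psi k) - u k * cnj (Lstar a b Psi k))"
      unfolding h_def Tu using ycnj Ly by (auto simp: mult.commute)
    have hs: "h summable_on UNIV" unfolding hfun
      using summable_on_add[OF s1 summable_on_uminus[THEN iffD2, OF s2]] by simp
    have diff: "l2_inner (T u) Psi - l2_inner u (Lstar a b Psi) = infsum h UNIV"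
      unfolding hfun l2_inner_def by (rule infsum_diff'[OF s1 s2, symmetric])
    have h0: "h k = 0" if "k \<ge> 2" for k
      unfolding h_def y_def Lstar_def using that by simp
    have hU: "infsum h UNIV = infsum h {..1}"
      by (rule infsum_cong_neutral) (use h0 in auto)
    have hs1: "h summable_on {..1}" using hs by (rule summable_on_subset) simp
    have lim: "((\<lambda>M. sum h {M<..1}) \<longlongrightarrow> infsum h {..1}) at_bot"
      by (rule partial_to_infsum[OF hs1])
    have ev: "\<forall>\<^sub>F M in at_bot. sum h {M<..1} = - wronski a u P M"
      unfolding eventually_at_bot_linorder
    proof (intro exI[of _ "-1"] allI impI)
      fix M :: int assume M: "M \<le> -1"
      have "sum h {M<..1} = wronski a u y 1 - wronski a u y M"
        unfolding h_def by (rule green_interval) (use M in simp)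
      also have "wronski a u y 1 = 0" unfolding wronski_def y_def by simp
      also have "wronski a u y M = wronski a u P M" unfolding wronski_def y_def using M by simp
      finally show "sum h {M<..1} = - wronski a u P M" by simp
    qed
    have lim2: "((\<lambda>M. - wronski a u P M) \<longlongrightarrow> infsum h {..1}) at_bot"
      by (rule Lim_transform_eventually[OF lim ev])
    have "infsum h {..1} = 0"
    proof (rule ccontr)
      assume d: "infsum h {..1} \<noteq> 0"
      define d where "d = infsum h {..1}"
      have "((\<lambda>M. cmod (wronski a u P M)) \<longlongrightarrow> cmod d) at_bot"
        using tendsto_norm[OF lim2] unfolding d_def by simp
      moreover have "cmod d / 2 < cmod d" using d unfolding d_def by simp
      ultimately have "\<forall>\<^sub>F M in at_bot. cmod d / 2 < cmod (wronski a u P M)"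
        by (rule order_tendstoD(1))
      then obtain K0 where K0: "\<And>M. M \<le> K0 \<Longrightarrow> cmod d / 2 < cmod (wronski a u P M)"
        unfolding eventually_at_bot_linorder by auto
      define W' where "W' = wronski a (phi w) P 0"
      have W'0: "W' \<noteq> 0" unfolding W'_def P_def using wr[OF w] .
      define Q where "Q k = (- 1 / W') * phi w k" for k
      have solP: "solz a b w P" unfolding P_def by (rule solPhi[OF w])
      have solQ: "solz a b w Q" unfolding solz_def
      proof
        fix k have "Lstar a b Q k = (-1/W') * Lstar a b (phi w) k" unfolding Q_def by (rule Lstar_scale)
        thus "Lstar a b Q k = w * Q k" using solphi[OF w] unfolding solz_def Q_def by simp
      qed
      have wPQ: "wronski a P Q k = 1" for k
      proof -
        have "wronski a P Q k = (- 1 / W') * wronski a P (phi w) k"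
          unfolding Q_def by (rule wronski_scale2)
        also have "wronski a P (phi w) k = - wronski a (phi w) P k" by (rule wronski_swap)
        also have "wronski a (phi w) P k = W'" unfolding W'_def P_def by (rule Wconst[OF w])
        finally show ?thesis using W'0 by simp
      qed
      have lP: "l2on P {..-1}" unfolding P_def by (rule l2Phi[OF w])
      have lux: "l2on u {..-1}" using lu unfolding is_l2_def by (rule l2_subset) simp
      have lf: "l2on (\<lambda>l. Lstar a b u l - w * u l) {..-1}"
      proof -
        have "is_l2 (\<lambda>l. T u l - w * u l)"
          unfolding is_l2_def by (rule l2_minus[OF lTu[unfolded is_l2_def] l2_scale[OF lu[unfolded is_l2_def]]])
        thus ?thesis unfolding Tu is_l2_def by (rule l2_subset) simp
      qed
      have "l2on Q {..-1}"
        by (rule LP_lemma[OF solP solQ wPQ lP lux lf, of "cmod d / 2" K0])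
           (use d K0 in \<open>auto simp: d_def less_imp_le\<close>)
      thus False by (rule no_LC[OF apos def00 solP solQ wPQ lP])
    qed
    thus ?thesis using diff hU by simp
  qed
  have "Psi \<in> D" unfolding D_char[OF sa] using lPsi lLPsi key by blast
  thus ?thesis unfolding Psi_def .
qed


lemma finite_between: "finite {k::int. (k \<le> m) \<noteq> (k \<le> n)}"
  by (rule finite_subset[of _ "{min m n..max m n}"]) auto

lemma col_D:
  assumes z: "Im z \<noteq> 0"
  shows "(\<lambda>k. Gker a (Phi z) (phi z) k m) \<in> D"
proof -
  define W where "W = wronski a (phi z) (Phi z) 0"
  define Psim where "Psim k = (if k \<le> m then Phi z k else 0)" for k
  define phim where "phim k = (if k \<le> m then 0 else phi z k)" for k
  have P1: "Psim \<in> D"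
  proof (rule D_mod[OF sa Psi_D[OF z]])
    show "finite {k. (if k \<le> 0 then Phi z k else 0) \<noteq> Psim k}"
      by (rule finite_subset[OF _ finite_between[of 0 m]]) (auto simp: Psim_def)
  qed
  have P2: "phim \<in> D"
  proof (rule D_mod[OF sa trunc[OF z]])
    show "finite {k. (if k < 0 then 0 else phi z k) \<noteq> phim k}"
      by (rule finite_subset[OF _ finite_between[of "-1" m]]) (auto simp: phim_def)
  qed
  have "(\<lambda>k. (phi z m / W) * Psim k + (Phi z m / W) * phim k) \<in> D"
    by (intro D_add[OF sa] D_scale[OF sa] P1 P2)
  moreover have "(\<lambda>k. (phi z m / W) * Psim k + (Phi z m / W) * phim k) = (\<lambda>k. Gker a (Phi z) (phi z) k m)"
    unfolding Gker_def Psim_def phim_def W_def by (auto simp: field_simps)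
  ultimately show ?thesis by simp
qed

lemma row_l2:
  assumes z: "Im z \<noteq> 0"
  shows "l2on (\<lambda>l. Gker a (Phi z) (phi z) k l) UNIV"
proof -
  define W where "W = wronski a (phi z) (Phi z) 0"
  have A: "l2on (\<lambda>l. Gker a (Phi z) (phi z) k l) {k..}"
  proof -
    have "l2on (phi z) {k..}" by (rule l2_cofin[OF l2phi[OF z]], rule finite_subset[of _ "{k..<0}"]) auto
    hence "l2on (\<lambda>l. (Phi z k / W) * phi z l) {k..}" by (rule l2_scale)
    thus ?thesis by (rule summable_on_cong[THEN iffD1, rotated]) (auto simp: Gker_def W_def)
  qed
  have B: "l2on (\<lambda>l. Gker a (Phi z) (phi z) k l) {..<k}"
  proof -
    have "l2on (Phi z) {..<k}" by (rule l2_cofin[OF l2Phi[OF z]], rule finite_subset[of _ "{0..<k}"]) auto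
    hence "l2on (\<lambda>l. (phi z k / W) * Phi z l) {..<k}" by (rule l2_scale)
    thus ?thesis by (rule summable_on_cong[THEN iffD1, rotated]) (auto simp: Gker_def W_def mult.commute)
  qed
  have "l2on (\<lambda>l. Gker a (Phi z) (phi z) k l) ({..<k} \<union> {k..})" by (rule l2_union[OF B A])
  moreover have "{..<k} \<union> {k..} = UNIV" by auto
  ultimately show ?thesis by simp
qed

lemma col_eq:
  assumes z: "Im z \<noteq> 0"
  shows "of_real (a k) * Gker a (Phi z) (phi z) (k+1) l + of_real (b k) * Gker a (Phi z) (phi z) k l
        + of_real (a (k-1)) * Gker a (Phi z) (phi z) (k-1) l
       = (if k = l then 1 else 0) + z * Gker a (Phi z) (phi z) k l"
proof -
  define W where "W = wronski a (phi z) (Phi z) 0"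
  have W0: "W \<noteq> 0" unfolding W_def by (rule wr[OF z])
  have eP: "of_real (a k) * Phi z (k+1) + of_real (b k) * Phi z k + of_real (a (k-1)) * Phi z (k-1) = z * Phi z k"
    using solPhi[OF z] unfolding solz_def Lstar_def by simp
  have ep: "of_real (a k) * phi z (k+1) + of_real (b k) * phi z k + of_real (a (k-1)) * phi z (k-1) = z * phi z k"
    using solphi[OF z] unfolding solz_def Lstar_def by simp
  consider "k < l" | "k = l" | "k > l" by linarith
  thus ?thesis
  proof cases
    case 1
    hence "of_real (a k) * Gker a (Phi z) (phi z) (k+1) l + of_real (b k) * Gker a (Phi z) (phi z) k l
        + of_real (a (k-1)) * Gker a (Phi z) (phi z) (k-1) l
       = (of_real (a k) * Phi z (k+1) + of_real (b k) * Phi z k + of_real (a (k-1)) * Phi z (k-1)) * phi z l / W"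
      unfolding Gker_def W_def[symmetric] using 1 W0 by (simp add: field_simps)
    also have "\<dots> = z * Gker a (Phi z) (phi z) k l" unfolding eP Gker_def W_def using 1 by simp
    finally show ?thesis using 1 by simp
  next
    case 3
    have g1: "Gker a (Phi z) (phi z) (k-1) l = Phi z l * phi z (k-1) / W"
      using 3 by (cases "k - 1 = l") (auto simp: Gker_def W_def)
    hence "of_real (a k) * Gker a (Phi z) (phi z) (k+1) l + of_real (b k) * Gker a (Phi z) (phi z) k l
        + of_real (a (k-1)) * Gker a (Phi z) (phi z) (k-1) l
       = Phi z l * (of_real (a k) * phi z (k+1) + of_real (b k) * phi z k + of_real (a (k-1)) * phi z (k-1)) / W"
      unfolding Gker_def W_def[symmetric] using 3 W0 by (simp add: field_simps)
    also have "\<dots> = z * Gker a (Phi z) (phi z) k l" unfolding ep Gker_def W_def using 3 by simp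
    finally show ?thesis using 3 by simp
  next
    case 2
    have Wl: "wronski a (phi z) (Phi z) l = W" unfolding W_def by (rule Wconst[OF z])
    have "of_real (a k) * Gker a (Phi z) (phi z) (k+1) l + of_real (b k) * Gker a (Phi z) (phi z) k l
        + of_real (a (k-1)) * Gker a (Phi z) (phi z) (k-1) l
       = (of_real (a l) * Phi z l * phi z (l+1) + of_real (b l) * Phi z l * phi z l
          + of_real (a (l-1)) * Phi z (l-1) * phi z l) / W"
      unfolding Gker_def W_def[symmetric] using 2 W0 by (simp add: field_simps)
    also have "\<dots> = (wronski a (phi z) (Phi z) l + z * Phi z l * phi z l) / W"
    proof -
      have "of_real (a (l-1)) * Phi z (l-1) = z * Phi z l - of_real (a l) * Phi z (l+1) - of_real (b l) * Phi z l"
        using eP 2 by (simp add: algebra_simps)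
      hence "of_real (a (l-1)) * Phi z (l-1) * phi z l = (z * Phi z l - of_real (a l) * Phi z (l+1) - of_real (b l) * Phi z l) * phi z l"
        by simp
      thus ?thesis unfolding wronski_def by (simp add: algebra_simps)
    qed
    also have "\<dots> = 1 + z * Gker a (Phi z) (phi z) k l"
      unfolding Wl Gker_def W_def[symmetric] using 2 W0 by (simp add: field_simps)
    finally show ?thesis using 2 by simp
  qed
qed

lemma Gop_summ:
  assumes z: "Im z \<noteq> 0" and v: "is_l2 v"
  shows "(\<lambda>l. v l * Gker a (Phi z) (phi z) k l) summable_on UNIV"
  using l2_prod[OF v[unfolded is_l2_def] row_l2[OF z]] .

lemma Gop_L:
  assumes z: "Im z \<noteq> 0" and v: "is_l2 v"
  shows "Lstar a b (Gop a (Phi z) (phi z) v) k = v k + z * Gop a (Phi z) (phi z) v k"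
proof -
  let ?G = "Gker a (Phi z) (phi z)"
  have s: "\<And>j. (\<lambda>l. v l * ?G j l) summable_on UNIV" by (rule Gop_summ[OF z v])
  have "Lstar a b (Gop a (Phi z) (phi z) v) k
      = infsum (\<lambda>l. of_real (a k) * (v l * ?G (k+1) l) + of_real (b k) * (v l * ?G k l)
                      + of_real (a (k-1)) * (v l * ?G (k-1) l)) UNIV"
    unfolding Lstar_def Gop_def
    by (subst infsum_add, (intro summable_on_add summable_on_cmult_right s)+,
        subst infsum_add, (intro summable_on_add summable_on_cmult_right s)+)
       (simp add: infsum_cmult_right')
  also have "\<dots> = infsum (\<lambda>l. (if l = k then v l else 0) + z * (v l * ?G k l)) UNIV"
  proof (rule infsum_cong)
    fix l
    have "of_real (a k) * (v l * ?G (k+1) l) + of_real (b k) * (v l * ?G k l) + of_real (a (k-1)) * (v l * ?G (k-1) l)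
        = v l * (of_real (a k) * ?G (k+1) l + of_real (b k) * ?G k l + of_real (a (k-1)) * ?G (k-1) l)"
      by (simp add: algebra_simps)
    also have "\<dots> = v l * ((if k = l then 1 else 0) + z * ?G k l)" using col_eq[OF z, of k l] by simp
    finally show "of_real (a k) * (v l * ?G (k+1) l) + of_real (b k) * (v l * ?G k l) + of_real (a (k-1)) * (v l * ?G (k-1) l)
        = (if l = k then v l else 0) + z * (v l * ?G k l)" by (auto simp: algebra_simps)
  qed
  also have "\<dots> = infsum (\<lambda>l. if l = k then v l else 0) UNIV + z * infsum (\<lambda>l. v l * ?G k l) UNIV"
  proof -
    have "(\<lambda>l. if l = k then v l else 0) summable_on UNIV"
      by (rule finite_nonzero_values_imp_summable_on, rule finite_subset[of _ "{k}"]) auto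
    thus ?thesis by (subst infsum_add) (auto intro: summable_on_cmult_right s simp: infsum_cmult_right')
  qed
  also have "infsum (\<lambda>l. if l = k then v l else 0) UNIV = v k"
    by (subst infsum_fin_supp[of "{k}"]) auto
  finally show ?thesis unfolding Gop_def by simp
qed

lemma Gop_fin_D:
  assumes z: "Im z \<noteq> 0" and v: "fin_supp v"
  shows "Gop a (Phi z) (phi z) v \<in> D"
proof -
  define S where "S = {k. v k \<noteq> 0}"
  have S: "finite S" using v unfolding fin_supp_def S_def .
  have "Gop a (Phi z) (phi z) v = (\<lambda>k. \<Sum>m\<in>S. v m * Gker a (Phi z) (phi z) k m)"
    unfolding Gop_def by (rule ext, rule infsum_fin_supp[OF S]) (auto simp: S_def)
  moreover have "(\<lambda>k. \<Sum>m\<in>S. v m * Gker a (Phi z) (phi z) k m) \<in> D"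
    by (rule D_sum[OF sa S col_D[OF z]])
  ultimately show ?thesis by simp
qed


lemma sym_partial:
  fixes F :: "int \<Rightarrow> 'b::{comm_monoid_add,t2_space}"
  assumes "F summable_on UNIV"
  shows "(\<lambda>n. sum F {- int n..int n}) \<longlonglongrightarrow> infsum F UNIV"
proof -
  have lim: "(sum F \<longlongrightarrow> infsum F UNIV) (finite_subsets_at_top UNIV)"
    using infsum_tendsto[OF assms] .
  have fl: "filterlim (\<lambda>n. {- int n..int n}) (finite_subsets_at_top UNIV) sequentially"
  proof (subst filterlim_finite_subsets_at_top, intro allI impI)
    fix X :: "int set" assume X: "finite X \<and> X \<subseteq> UNIV"
    define N where "N = nat (Max (insert 0 (abs ` X)))"
    have "\<forall>x\<in>X. \<bar>x\<bar> \<le> int N" unfolding N_def using X by (auto intro: Max_ge)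
    thus "\<forall>\<^sub>F n in sequentially. finite {- int n..int n} \<and> X \<subseteq> {- int n..int n} \<and> {- int n..int n} \<subseteq> UNIV"
      unfolding eventually_sequentially by (intro exI[of _ N]) force
  qed
  show ?thesis using filterlim_compose[OF lim fl] by simp
qed

lemma main1:
  assumes z: "Im z \<noteq> 0" and v: "is_l2 v"
  shows "Gop a (Phi z) (phi z) v \<in> D \<and> (\<lambda>k. T (Gop a (Phi z) (phi z) v) k - z * Gop a (Phi z) (phi z) v k) = v"
proof -
  let ?G = "Gker a (Phi z) (phi z)"
  define vn where "vn n = (\<lambda>k. if \<bar>k\<bar> \<le> int n then v k else 0)" for n
  define gn where "gn n = Gop a (Phi z) (phi z) (vn n)" for n
  define g where "g = Gop a (Phi z) (phi z) v"
  have fs: "fin_supp (vn n)" for n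
    unfolding fin_supp_def vn_def by (rule finite_subset[of _ "{- int n..int n}"]) auto
  have lvn: "is_l2 (vn n)" for n using fs[of n] unfolding fin_supp_def is_l2_def by (rule l2_fin)
  have gnD: "gn n \<in> D" for n unfolding gn_def by (rule Gop_fin_D[OF z fs])
  have Tgn: "T (gn n) = (\<lambda>k. vn n k + z * gn n k)" for n
    using D_T[OF sa gnD[of n]] Gop_L[OF z lvn[of n]] unfolding gn_def by auto
  have lgn: "is_l2 (gn n)" for n using D_l2[OF sa gnD] .
  have lv: "l2on v UNIV" using v unfolding is_l2_def .
  have lvd: "is_l2 (\<lambda>k. v k - vn n k)" for n using l2_minus[OF lv lvn[of n, unfolded is_l2_def]] unfolding is_l2_def .
  have pw: "(\<lambda>n. gn n k) \<longlonglongrightarrow> g k" for k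
  proof -
    have "gn n k = sum (\<lambda>l. v l * ?G k l) {- int n..int n}" for n
    proof -
      have "gn n k = sum (\<lambda>l. vn n l * ?G k l) {- int n..int n}"
        unfolding gn_def Gop_def by (rule infsum_fin_supp) (auto simp: vn_def)
      also have "\<dots> = sum (\<lambda>l. v l * ?G k l) {- int n..int n}"
        by (intro sum.cong) (auto simp: vn_def)
      finally show ?thesis .
    qed
    thus ?thesis using sym_partial[OF Gop_summ[OF z v, of k]] unfolding g_def Gop_def by simp
  qed
  define e where "e n = nrm2 (\<lambda>k. v k - vn n k)" for n
  have e0: "0 \<le> e n" for n unfolding e_def by (rule nrm2_nonneg)
  have elim: "e \<longlonglongrightarrow> 0"
  proof -
    have Efor: "e n = nrm2 v - sum (\<lambda>k. (cmod (v k))^2) {- int n..int n}" for n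
    proof -
      have "(\<lambda>k. (cmod (v k - vn n k))^2) = (\<lambda>k. (cmod (v k))^2 - (if \<bar>k\<bar> \<le> int n then (cmod (v k))^2 else 0))"
        unfolding vn_def by auto
      moreover have "(\<lambda>k. if \<bar>k\<bar> \<le> int n then (cmod (v k))^2 else 0) summable_on UNIV"
        by (rule finite_nonzero_values_imp_summable_on, rule finite_subset[of _ "{- int n..int n}"]) auto
      moreover have "infsum (\<lambda>k. if \<bar>k\<bar> \<le> int n then (cmod (v k))^2 else 0) UNIV = sum (\<lambda>k. (cmod (v k))^2) {- int n..int n}"
        by (rule trans[OF infsum_fin_supp[of "{- int n..int n}"]], auto intro!: sum.cong)
      ultimately show ?thesis unfolding e_def nrm2_def using infsum_diff'[OF lv] by simp
    qed
    hence "e = (\<lambda>n. nrm2 v - sum (\<lambda>k. (cmod (v k))^2) {- int n..int n})" by (intro ext) (rule Efor)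
    moreover have "(\<lambda>n. nrm2 v - sum (\<lambda>k. (cmod (v k))^2) {- int n..int n}) \<longlonglongrightarrow> nrm2 v - nrm2 v"
      unfolding nrm2_def by (intro tendsto_intros sym_partial lv)
    ultimately show ?thesis by simp
  qed
  define c where "c = (Im z)^2"
  have c0: "c > 0" unfolding c_def using z by simp
  have cb: "nrm2 (\<lambda>k. gn m k - gn n k) \<le> e n / c" if mn: "n \<le> m" for m n
  proof -
    define d where "d = (\<lambda>k. gn m k - gn n k)"
    have dD: "d \<in> D" unfolding d_def by (rule D_diff[OF sa gnD gnD])
    have Td: "(\<lambda>k. T d k - z * d k) = (\<lambda>k. vn m k - vn n k)"
    proof
      fix k
      have "T d k = Lstar a b (gn m) k - Lstar a b (gn n) k"
        using D_T[OF sa dD] unfolding d_def by (simp add: Lstar_diff)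
      also have "\<dots> = (vn m k + z * gn m k) - (vn n k + z * gn n k)"
        using Tgn[of m] Tgn[of n] D_T[OF sa gnD[of m]] D_T[OF sa gnD[of n]] by metis
      finally show "T d k - z * d k = vn m k - vn n k" unfolding d_def by (simp add: algebra_simps)
    qed
    have "\<bar>Im z\<bar> * sqrt (nrm2 d) \<le> sqrt (nrm2 (\<lambda>k. vn m k - vn n k))"
      using D_bound[OF sa dD, of z] unfolding Td .
    also have "nrm2 (\<lambda>k. vn m k - vn n k) \<le> e n"
      unfolding e_def nrm2_def
    proof (rule infsum_mono)
      show "(\<lambda>k. (cmod (vn m k - vn n k))^2) summable_on UNIV"
        using l2_minus[OF lvn[of m, unfolded is_l2_def] lvn[of n, unfolded is_l2_def]] .
      show "(\<lambda>k. (cmod (v k - vn n k))^2) summable_on UNIV" using lvd[of n] unfolding is_l2_def .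
      fix k show "(cmod (vn m k - vn n k))^2 \<le> (cmod (v k - vn n k))^2"
        unfolding vn_def using mn by auto
    qed
    hence "sqrt (nrm2 (\<lambda>k. vn m k - vn n k)) \<le> sqrt (e n)" by simp
    finally have "(\<bar>Im z\<bar> * sqrt (nrm2 d))^2 \<le> (sqrt (e n))^2"
      by (intro power_mono) (auto simp: nrm2_nonneg)
    hence "c * nrm2 d \<le> e n" unfolding c_def using nrm2_nonneg[of d] e0[of n]
      by (simp add: power_mult_distrib)
    thus ?thesis unfolding d_def using c0 by (simp add: field_simps)
  qed
  \<comment> \<open>Fatou\<close>
  have fat: "l2on (\<lambda>k. g k - gn n k) UNIV \<and> nrm2 (\<lambda>k. g k - gn n k) \<le> e n / c" for n
  proof -
    have fb: "sum (\<lambda>k. (cmod (g k - gn n k))^2) F \<le> e n / c" if F: "finite F" for F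
    proof -
      have "(\<lambda>m. sum (\<lambda>k. (cmod (gn m k - gn n k))^2) F) \<longlonglongrightarrow> sum (\<lambda>k. (cmod (g k - gn n k))^2) F"
        by (intro tendsto_sum tendsto_power tendsto_norm tendsto_diff pw tendsto_const)
      moreover have "\<forall>m\<ge>n. sum (\<lambda>k. (cmod (gn m k - gn n k))^2) F \<le> e n / c"
      proof (intro allI impI)
        fix m assume "n \<le> m"
        have "sum (\<lambda>k. (cmod (gn m k - gn n k))^2) F \<le> nrm2 (\<lambda>k. gn m k - gn n k)"
          unfolding nrm2_def
          by (rule finite_sum_le_infsum) (use l2_minus[OF lgn[of m, unfolded is_l2_def] lgn[of n, unfolded is_l2_def]] F in auto)
        also have "\<dots> \<le> e n / c" by (rule cb[OF \<open>n \<le> m\<close>])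
        finally show "sum (\<lambda>k. (cmod (gn m k - gn n k))^2) F \<le> e n / c" .
      qed
      ultimately show ?thesis by (intro LIMSEQ_le_const2) auto
    qed
    have sm: "l2on (\<lambda>k. g k - gn n k) UNIV"
      by (rule nonneg_bdd_above_summable_on) (auto intro!: bdd_aboveI2 fb)
    moreover have "nrm2 (\<lambda>k. g k - gn n k) \<le> e n / c"
      unfolding nrm2_def by (rule infsum_le_finite_sums[OF sm fb]) 
    ultimately show ?thesis by blast
  qed
  have lg: "is_l2 g"
  proof -
    have "l2on (\<lambda>k. gn 0 k + (g k - gn 0 k)) UNIV"
      by (rule l2_add[OF lgn[of 0, unfolded is_l2_def]]) (use fat in blast)
    thus ?thesis unfolding is_l2_def by simp
  qed
  have lgd: "is_l2 (\<lambda>k. g k - gn n k)" for n using fat unfolding is_l2_def by blast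
  have lzg: "is_l2 (\<lambda>k. z * g k)" using lg unfolding is_l2_def by (rule l2_scale)
  have lw: "is_l2 (\<lambda>k. v k + z * g k)" using l2_add[OF lv lzg[unfolded is_l2_def]] unfolding is_l2_def .
  have weak: "l2_inner (T u) g = l2_inner u (\<lambda>k. v k + z * g k)" if u: "u \<in> D" for u
  proof -
    have lu: "is_l2 u" and lTu: "is_l2 (T u)" using D_l2[OF sa u] D_l2T[OF sa u] by auto
    define X where "X = l2_inner (T u) g - l2_inner u (\<lambda>k. v k + z * g k)"
    define \<delta> where "\<delta> n = sqrt (nrm2 (T u)) * sqrt (e n / c) + sqrt (nrm2 u) * (sqrt (e n) + cmod z * sqrt (e n / c))" for n
    have bndX: "cmod X \<le> \<delta> n" for n
    proof -
      have lzgn: "is_l2 (\<lambda>k. z * gn n k)" using lgn[of n] unfolding is_l2_def by (rule l2_scale)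
      have A: "l2_inner (T u) (gn n) = l2_inner u (\<lambda>k. vn n k + z * gn n k)"
        using D_sym[OF sa u gnD[of n]] Tgn[of n] by simp
      have B1: "l2_inner (T u) g - l2_inner (T u) (gn n) = l2_inner (T u) (\<lambda>k. g k - gn n k)"
        by (rule inner_diff2[OF lTu lg lgn, symmetric])
      have B2: "l2_inner u (\<lambda>k. v k + z * g k) - l2_inner u (\<lambda>k. vn n k + z * gn n k)
          = l2_inner u (\<lambda>k. v k - vn n k) + cnj z * l2_inner u (\<lambda>k. g k - gn n k)"
      proof -
        have e1: "l2_inner u v = l2_inner u (vn n) + l2_inner u (\<lambda>k. v k - vn n k)"
          using inner_diff2[OF lu v lvn[of n]] by simp
        have e2: "l2_inner u g = l2_inner u (gn n) + l2_inner u (\<lambda>k. g k - gn n k)"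
          using inner_diff2[OF lu lg lgn[of n]] by simp
        show ?thesis
          unfolding inner_add2[OF lu v lzg] inner_add2[OF lu lvn[of n] lzgn] inner_scale2[of u z g]
            inner_scale2[of u z "gn n"] e1 e2 by (simp add: algebra_simps)
      qed
      have "X = l2_inner (T u) (\<lambda>k. g k - gn n k) - (l2_inner u (\<lambda>k. v k - vn n k) + cnj z * l2_inner u (\<lambda>k. g k - gn n k))"
        unfolding X_def using A B1 B2 by (simp add: algebra_simps)
      hence X1: "cmod X \<le> cmod (l2_inner (T u) (\<lambda>k. g k - gn n k)) + cmod (l2_inner u (\<lambda>k. v k - vn n k) + cnj z * l2_inner u (\<lambda>k. g k - gn n k))"
        by (simp add: norm_triangle_ineq4)
      have X2: "cmod (l2_inner u (\<lambda>k. v k - vn n k) + cnj z * l2_inner u (\<lambda>k. g k - gn n k))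
          \<le> cmod (l2_inner u (\<lambda>k. v k - vn n k)) + cmod z * cmod (l2_inner u (\<lambda>k. g k - gn n k))"
        using norm_triangle_ineq[of "l2_inner u (\<lambda>k. v k - vn n k)" "cnj z * l2_inner u (\<lambda>k. g k - gn n k)"]
        by (simp add: norm_mult)
      have "cmod X \<le> cmod (l2_inner (T u) (\<lambda>k. g k - gn n k)) + (cmod (l2_inner u (\<lambda>k. v k - vn n k)) + cmod z * cmod (l2_inner u (\<lambda>k. g k - gn n k)))"
        using X1 X2 by linarith
      also have "\<dots> \<le> sqrt (nrm2 (T u)) * sqrt (e n / c) + (sqrt (nrm2 u) * sqrt (e n) + cmod z * (sqrt (nrm2 u) * sqrt (e n / c)))"
      proof (intro add_mono mult_left_mono)
        show "cmod (l2_inner (T u) (\<lambda>k. g k - gn n k)) \<le> sqrt (nrm2 (T u)) * sqrt (e n / c)"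
        proof -
          have "sqrt (nrm2 (\<lambda>k. g k - gn n k)) \<le> sqrt (e n / c)" using fat[of n] by simp
          hence "sqrt (nrm2 (T u)) * sqrt (nrm2 (\<lambda>k. g k - gn n k)) \<le> sqrt (nrm2 (T u)) * sqrt (e n / c)"
            by (rule mult_left_mono) (simp add: nrm2_nonneg)
          thus ?thesis using CS[OF lTu lgd[of n]] by linarith
        qed
        show "cmod (l2_inner u (\<lambda>k. v k - vn n k)) \<le> sqrt (nrm2 u) * sqrt (e n)"
          using CS[OF lu lvd[of n]] unfolding e_def .
        show "cmod (l2_inner u (\<lambda>k. g k - gn n k)) \<le> sqrt (nrm2 u) * sqrt (e n / c)"
        proof -
          have "sqrt (nrm2 (\<lambda>k. g k - gn n k)) \<le> sqrt (e n / c)" using fat[of n] by simp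
          hence "sqrt (nrm2 u) * sqrt (nrm2 (\<lambda>k. g k - gn n k)) \<le> sqrt (nrm2 u) * sqrt (e n / c)"
            by (rule mult_left_mono) (simp add: nrm2_nonneg)
          thus ?thesis using CS[OF lu lgd[of n]] by linarith
        qed
      qed simp
      also have "\<dots> = \<delta> n" unfolding \<delta>_def by (simp add: algebra_simps)
      finally show ?thesis .
    qed
    have "\<delta> \<longlonglongrightarrow> sqrt (nrm2 (T u)) * sqrt (0 / c) + sqrt (nrm2 u) * (sqrt 0 + cmod z * sqrt (0 / c))"
      unfolding \<delta>_def by (intro tendsto_intros elim) (use c0 in auto)
    hence "\<delta> \<longlonglongrightarrow> 0" by simp
    hence "cmod X \<le> 0" using bndX by (intro LIMSEQ_le_const) auto
    thus ?thesis unfolding X_def by simp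
  qed
  have gD: "g \<in> D" unfolding D_char[OF sa] using lg lw weak by blast
  have "(\<lambda>k. T g k - z * g k) = v"
    using D_T[OF sa gD] Gop_L[OF z v] unfolding g_def by auto
  thus ?thesis using gD unfolding g_def by simp
qed

lemma main2:
  assumes z: "Im z \<noteq> 0" and u: "u \<in> D"
  shows "Gop a (Phi z) (phi z) (\<lambda>k. T u k - z * u k) = u"
proof -
  define y where "y = (\<lambda>k. T u k - z * u k)"
  have lu: "is_l2 u" and lTu: "is_l2 (T u)" using D_l2[OF sa u] D_l2T[OF sa u] by auto
  have ly: "is_l2 y" unfolding y_def is_l2_def
    by (rule l2_minus[OF lTu[unfolded is_l2_def] l2_scale[OF lu[unfolded is_l2_def]]])
  define g where "g = Gop a (Phi z) (phi z) y"
  have gD: "g \<in> D" and Tg: "(\<lambda>k. T g k - z * g k) = y" using main1[OF z ly] unfolding g_def by auto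
  define d where "d = (\<lambda>k. g k - u k)"
  have dD: "d \<in> D" unfolding d_def by (rule D_diff[OF sa gD u])
  have Td: "(\<lambda>k. T d k - z * d k) = (\<lambda>k. 0)"
  proof
    fix k
    have Tdk: "T d k = T g k - T u k"
      using D_T[OF sa dD] D_T[OF sa gD] D_T[OF sa u] unfolding d_def by (simp add: Lstar_diff)
    have dk: "d k = g k - u k" by (simp add: d_def)
    have "T g k - z * g k = T u k - z * u k" using Tg unfolding y_def by metis
    moreover have "T d k - z * d k = (T g k - z * g k) - (T u k - z * u k)"
      unfolding Tdk dk by (simp add: algebra_simps)
    ultimately show "T d k - z * d k = 0" by simp
  qed
  have "nrm2 (\<lambda>k::int. 0::complex) = 0" unfolding nrm2_def by simp
  hence h: "\<bar>Im z\<bar> * sqrt (nrm2 d) \<le> 0" using D_bound[OF sa dD, of z] unfolding Td by simp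
  have p: "\<bar>Im z\<bar> > 0" using z by simp
  have "sqrt (nrm2 d) \<le> 0"
  proof (rule ccontr)
    assume "\<not> sqrt (nrm2 d) \<le> 0"
    hence "sqrt (nrm2 d) > 0" by simp
    hence "\<bar>Im z\<bar> * sqrt (nrm2 d) > 0" using p by simp
    thus False using h by simp
  qed
  hence "nrm2 d \<le> 0" by simp
  hence "d k = 0" for k by (rule nrm2_zero[OF D_l2[OF sa dD]])
  hence "g = u" unfolding d_def by auto
  thus ?thesis unfolding g_def y_def .
qed

end

theorem proposition4p3p3:
  fixes a b :: "int \<Rightarrow> real"
    and T :: "(int \<Rightarrow> complex) \<Rightarrow> (int \<Rightarrow> complex)"
    and D :: "(int \<Rightarrow> complex) set"
    and Phi phi :: "complex \<Rightarrow> int \<Rightarrow> complex"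
  assumes apos: "\<And>k. a k > 0"
    and def00: "Jminus_def00 a b"
    and sa: "selfadj_ext a b T D"
    and Phi_S: "\<And>z. Im z \<noteq> 0 \<Longrightarrow> Phi z \<in> S_minus a b z \<and> Phi z \<noteq> (\<lambda>k. 0)"
    and phi_S: "\<And>z. Im z \<noteq> 0 \<Longrightarrow> phi z \<in> S_plus a b z"
    and Phi_cnj: "\<And>z k. Im z \<noteq> 0 \<Longrightarrow> cnj (Phi z k) = Phi (cnj z) k"
    and phi_cnj: "\<And>z k. Im z \<noteq> 0 \<Longrightarrow> cnj (phi z k) = phi (cnj z) k"
    and wr: "\<And>z. Im z \<noteq> 0 \<Longrightarrow> wronski a (phi z) (Phi z) 0 \<noteq> 0"
    and trunc: "\<And>z. Im z \<noteq> 0 \<Longrightarrow> (\<lambda>k. if k < 0 then 0 else phi z k) \<in> D"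
  shows "\<forall>z. Im z \<noteq> 0 \<longrightarrow>
           (\<forall>v. is_l2 v \<longrightarrow> Gop a (Phi z) (phi z) v \<in> D \<and>
                 (\<lambda>k. T (Gop a (Phi z) (phi z) v) k - z * Gop a (Phi z) (phi z) v k) = v) \<and>
           (\<forall>u\<in>D. Gop a (Phi z) (phi z) (\<lambda>k. T u k - z * u k) = u)"
proof (intro allI impI)
  fix z :: complex assume z: "Im z \<noteq> 0"
  show "(\<forall>v. is_l2 v \<longrightarrow> Gop a (Phi z) (phi z) v \<in> D \<and>
                 (\<lambda>k. T (Gop a (Phi z) (phi z) v) k - z * Gop a (Phi z) (phi z) v k) = v) \<and>
           (\<forall>u\<in>D. Gop a (Phi z) (phi z) (\<lambda>k. T u k - z * u k) = u)"
    using main1[OF apos def00 sa Phi_S phi_S Phi_cnj phi_cnj wr trunc z]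
      main2[OF apos def00 sa Phi_S phi_S Phi_cnj phi_cnj wr trunc z] by blast
qed

end
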